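(* Let $H_1,H_2$ be Hilbert spaces, let $C\in\mathcal{B}(H_2,H_1)$ be a contraction, and let $T=\begin{bmatrix}I_{H_1} & C\\ C^* & I_{H_2}\end{bmatrix}$ on $H_1\oplus H_2$. Then $T\in\overline{\mathcal{AN}(H_1\oplus H_2)}$ if and only if $C$ is compact.
   Context: Throughout, Hilbert spaces are complex, separable and infinite dimensional; $\mathcal{B}(H_1,H_2)$ denotes bounded linear operators with the operator norm. An operator $S\in\mathcal{B}(H_1,H_2)$ is norm attaining if there is a unit vector $x\in H_1$ with $\|Sx\|=\|S\|$; $S$ is absolutely norm attaining, written $S\in\mathcal{AN}(H_1,H_2)$ (and $\mathcal{AN}(H)=\mathcal{AN}(H,H)$), if for every nonzero closed subspace $M\subseteq H_1$ the restriction $S|_M$ is norm attaining. $\overline{\mathcal{AN}(H)}$ denotes the operator-norm closure of $\mathcal{AN}(H)$ in $\mathcal{B}(H)$. *)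

theory Defs
  imports "HOL-Analysis.Analysis"
begin

class complex_vector = real_vector +
  fixes scaleC :: "complex \<Rightarrow> 'a \<Rightarrow> 'a" (infixr \<open>*\<^sub>C\<close> 75)
  assumes scaleC_add_right: "a *\<^sub>C (x + y) = a *\<^sub>C x + a *\<^sub>C y"
    and scaleC_add_left: "(a + b) *\<^sub>C x = a *\<^sub>C x + b *\<^sub>C x"
    and scaleC_scaleC: "a *\<^sub>C (b *\<^sub>C x) = (a * b) *\<^sub>C x"
    and scaleC_one: "1 *\<^sub>C x = x"
    and scaleR_scaleC: "r *\<^sub>R x = complex_of_real r *\<^sub>C x"

text \<open>Complex inner product space; the inner product is linear in the second and
  conjugate-linear in the first argument; the norm is the one induced by it.\<close>
class complex_inner = complex_vector + real_normed_vector +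
  fixes cinner :: "'a \<Rightarrow> 'a \<Rightarrow> complex"
  assumes cinner_conj: "cinner x y = cnj (cinner y x)"
    and cinner_add_right: "cinner x (y + z) = cinner x y + cinner x z"
    and cinner_scaleC_right: "cinner x (a *\<^sub>C y) = a * cinner x y"
    and norm_eq_sqrt_cinner: "norm x = sqrt (Re (cinner x x))"

class chilbert_space = complex_inner + complete_space

text \<open>The Hilbert direct sum \<open>H1 \<oplus> H2\<close> is the product type; its norm (from Product_Vector) is
  \<open>norm (a,b) = sqrt (norm a ^ 2 + norm b ^ 2)\<close>; scalars act componentwise.\<close>
instantiation prod :: (complex_vector, complex_vector) complex_vector
begin
definition scaleC_prod_def: "c *\<^sub>C x = (c *\<^sub>C fst x, c *\<^sub>C snd x)"
instance
  by standard (auto simp: scaleC_prod_def prod_eq_iff scaleC_add_right scaleC_add_left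
      scaleC_scaleC scaleC_one scaleR_scaleC[symmetric])
end

definition cspan :: "'a::complex_vector set \<Rightarrow> 'a set" where
  "cspan S = {x. \<exists>F c. finite F \<and> F \<subseteq> S \<and> x = (\<Sum>v\<in>F. c v *\<^sub>C v)}"

definition separable_infdim :: "'a::complex_inner itself \<Rightarrow> bool" where
  "separable_infdim _ \<longleftrightarrow> separable_space (euclidean :: 'a topology)
      \<and> (\<forall>S::'a set. finite S \<longrightarrow> cspan S \<noteq> UNIV)"

definition clinear :: "('a::complex_vector \<Rightarrow> 'b::complex_vector) \<Rightarrow> bool" where
  "clinear f \<longleftrightarrow> (\<forall>x y. f (x + y) = f x + f y) \<and> (\<forall>c x. f (c *\<^sub>C x) = c *\<^sub>C f x)"

text \<open>\<open>\<B>(H1,H2)\<close>: complex-linear bounded operators (as bounded linear functions, whose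
  norm is the operator norm).\<close>
definition BOps :: "('a::{complex_vector,real_normed_vector} \<Rightarrow>\<^sub>L 'b::{complex_vector,real_normed_vector}) set" where
  "BOps = {S. clinear (blinfun_apply S)}"

definition csubspace :: "'a::complex_vector set \<Rightarrow> bool" where
  "csubspace M \<longleftrightarrow> 0 \<in> M \<and> (\<forall>x\<in>M. \<forall>y\<in>M. x + y \<in> M) \<and> (\<forall>c. \<forall>x\<in>M. c *\<^sub>C x \<in> M)"

definition norm_attaining_on :: "'a::real_normed_vector set \<Rightarrow> ('a \<Rightarrow>\<^sub>L 'b::real_normed_vector) \<Rightarrow> bool" where
  "norm_attaining_on M S \<longleftrightarrow>
     (\<exists>x\<in>M. norm x = 1 \<and> norm (S x) = Sup {norm (S y) | y. y \<in> M \<and> norm y = 1})"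

definition AN :: "('a::{complex_vector,real_normed_vector} \<Rightarrow>\<^sub>L 'b::{complex_vector,real_normed_vector}) set" where
  "AN = {S \<in> BOps. \<forall>M. csubspace M \<and> closed M \<and> M \<noteq> {0} \<longrightarrow> norm_attaining_on M S}"

definition compact_op :: "('a::real_normed_vector \<Rightarrow>\<^sub>L 'b::real_normed_vector) \<Rightarrow> bool" where
  "compact_op S \<longleftrightarrow> compact (closure (blinfun_apply S ` cball 0 1))"

definition block_op :: "('b::real_normed_vector \<Rightarrow>\<^sub>L 'a::real_normed_vector) \<Rightarrow> ('a \<Rightarrow>\<^sub>L 'b) \<Rightarrow> (('a \<times> 'b) \<Rightarrow>\<^sub>L ('a \<times> 'b))" where
  "block_op C C' = Blinfun (\<lambda>(x, y). (x + C y, C' x + y))"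

end

theory Submission
  imports Defs
begin


lemma scaleC_zero_right [simp]: "c *\<^sub>C (0::'a::complex_vector) = 0"
proof -
  have "c *\<^sub>C (0::'a) = c *\<^sub>C 0 + c *\<^sub>C 0" by (metis add_0 scaleC_add_right)
  then show ?thesis by simp
qed

lemma scaleC_zero_left [simp]: "(0::complex) *\<^sub>C (x::'a::complex_vector) = 0"
proof -
  have "(0::complex) *\<^sub>C x = 0 *\<^sub>C x + 0 *\<^sub>C x" by (metis add_0 scaleC_add_left)
  then show ?thesis by simp
qed

lemma scaleC_minus_right: "c *\<^sub>C (- x) = - (c *\<^sub>C (x::'a::complex_vector))"
  by (metis add_right_imp_eq scaleC_add_right scaleC_zero_right add.left_inverse)

lemma scaleC_diff_right: "c *\<^sub>C (x - y) = c *\<^sub>C x - c *\<^sub>C (y::'a::complex_vector)"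
  by (metis diff_conv_add_uminus scaleC_add_right scaleC_minus_right)

lemma scaleC_minus_left: "(- c) *\<^sub>C x = - (c *\<^sub>C (x::'a::complex_vector))"
  by (metis add_right_imp_eq scaleC_add_left scaleC_zero_left add.left_inverse)

lemma scaleC_diff_left: "(c - d) *\<^sub>C x = c *\<^sub>C x - d *\<^sub>C (x::'a::complex_vector)"
  by (metis diff_conv_add_uminus scaleC_add_left scaleC_minus_left)

lemma scaleC_sum_right: "c *\<^sub>C (\<Sum>i\<in>A. f i) = (\<Sum>i\<in>A. c *\<^sub>C (f i::'a::complex_vector))"
  by (induction A rule: infinite_finite_induct) (auto simp: scaleC_add_right)

lemma scaleC_of_real: "complex_of_real r *\<^sub>C x = r *\<^sub>R (x::'a::complex_vector)"
  by (simp add: scaleR_scaleC)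

lemma cinner_add_left: "cinner (x + y) z = cinner x z + cinner (y::'a::complex_inner) z"
  by (metis cinner_conj cinner_add_right complex_cnj_add)

lemma cinner_scaleC_left: "cinner (c *\<^sub>C x) y = cnj c * cinner (x::'a::complex_inner) y"
  by (metis cinner_conj cinner_scaleC_right complex_cnj_mult)

lemma cinner_zero_right [simp]: "cinner x (0::'a::complex_inner) = 0"
  by (metis add_0 add_cancel_left_left cinner_add_right)

lemma cinner_zero_left [simp]: "cinner (0::'a::complex_inner) x = 0"
  by (metis cinner_conj cinner_zero_right complex_cnj_zero)

lemma cinner_minus_right: "cinner x (- y) = - cinner x (y::'a::complex_inner)"
  by (metis add.right_inverse add_eq_0_iff cinner_add_right cinner_zero_right)

lemma cinner_minus_left: "cinner (- x) y = - cinner x (y::'a::complex_inner)"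
  by (metis cinner_conj cinner_minus_right complex_cnj_minus)

lemma cinner_diff_right: "cinner x (y - z) = cinner x y - cinner x (z::'a::complex_inner)"
  unfolding diff_conv_add_uminus by (simp only: cinner_add_right cinner_minus_right)

lemma cinner_diff_left: "cinner (x - y) z = cinner x z - cinner y (z::'a::complex_inner)"
  unfolding diff_conv_add_uminus by (simp only: cinner_add_left cinner_minus_left)

lemma cinner_sum_right: "cinner x (\<Sum>i\<in>A. f i) = (\<Sum>i\<in>A. cinner x (f i::'a::complex_inner))"
  by (induction A rule: infinite_finite_induct) (auto simp: cinner_add_right)

lemma cinner_sum_left: "cinner (\<Sum>i\<in>A. f i) x = (\<Sum>i\<in>A. cinner (f i::'a::complex_inner) x)"
  by (induction A rule: infinite_finite_induct) (auto simp: cinner_add_left)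

lemma cinner_scaleR_right: "cinner x (r *\<^sub>R y) = complex_of_real r * cinner x (y::'a::complex_inner)"
  by (simp add: scaleR_scaleC cinner_scaleC_right)

lemma cinner_scaleR_left: "cinner (r *\<^sub>R x) y = complex_of_real r * cinner x (y::'a::complex_inner)"
  by (simp add: scaleR_scaleC cinner_scaleC_left)

lemma Im_cinner_self: "Im (cinner x (x::'a::complex_inner)) = 0"
  by (metis cinner_conj cnj.simps(2) neg_equal_zero)

lemma Re_cinner_self: "Re (cinner x (x::'a::complex_inner)) = (norm x)^2"
proof -
  have "sqrt (Re (cinner x x)) \<ge> 0" by (metis norm_eq_sqrt_cinner norm_ge_zero)
  then have "Re (cinner x x) \<ge> 0" using real_sqrt_ge_0_iff by blast
  then show ?thesis using norm_eq_sqrt_cinner[of x] by simp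
qed

lemma cinner_self: "cinner x (x::'a::complex_inner) = complex_of_real ((norm x)^2)"
  using Im_cinner_self[of x] Re_cinner_self[of x] by (simp add: complex_eq_iff)

lemma cinner_self_eq_0 [simp]: "cinner x (x::'a::complex_inner) = 0 \<longleftrightarrow> x = 0"
  by (simp add: cinner_self)

lemma norm_scaleC: "norm (c *\<^sub>C x) = cmod c * norm (x::'a::complex_inner)"
proof -
  have "(norm (c *\<^sub>C x))^2 = Re (cnj c * c * cinner x x)"
    by (simp only: Re_cinner_self[symmetric] cinner_scaleC_left cinner_scaleC_right mult.assoc mult.left_commute)
  also have "cnj c * c = complex_of_real ((cmod c)^2)"
    by (simp only: complex_norm_square mult.commute)
  finally have "(norm (c *\<^sub>C x))^2 = (cmod c)^2 * (norm x)^2"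
    by (simp add: Re_cinner_self)
  then have "(norm (c *\<^sub>C x))^2 = (cmod c * norm x)^2" by (simp add: power_mult_distrib)
  then show ?thesis by (simp add: power2_eq_iff_nonneg)
qed

lemma norm_add_sq: "(norm (x + y))^2 = (norm x)^2 + (norm y)^2 + 2 * Re (cinner x (y::'a::complex_inner))"
proof -
  have "(norm (x + y))^2 = Re (cinner (x+y) (x+y))" by (simp add: Re_cinner_self)
  also have "\<dots> = Re (cinner x x) + Re (cinner y y) + Re (cinner x y) + Re (cinner y x)"
    by (simp add: cinner_add_left cinner_add_right)
  also have "Re (cinner y x) = Re (cinner x y)" by (metis cinner_conj complex_cnj_cnj cnj.simps(1))
  finally show ?thesis by (simp add: Re_cinner_self)
qed

lemma norm_diff_sq: "(norm (x - y))^2 = (norm x)^2 + (norm y)^2 - 2 * Re (cinner x (y::'a::complex_inner))"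
  using norm_add_sq[of x "-y"] by (simp add: cinner_minus_right)

lemma pythagoras: "cinner x y = 0 \<Longrightarrow> (norm (x + y))^2 = (norm x)^2 + (norm (y::'a::complex_inner))^2"
  by (simp add: norm_add_sq)

lemma norm_diff_scaleC_sq:
  "(norm (y - c *\<^sub>C x))^2 = (norm y)^2 + (cmod c)^2 * (norm x)^2 - 2 * Re (c * cinner y (x::'a::complex_inner))"
  by (simp add: norm_diff_sq norm_scaleC cinner_scaleC_right power_mult_distrib)

lemma cauchy_schwarz: "cmod (cinner x y) \<le> norm x * norm (y::'a::complex_inner)"
proof (cases "x = 0")
  case True then show ?thesis by simp
next
  case False
  define c where "c = cinner x y / complex_of_real ((norm x)^2)"
  have nx: "norm x > 0" using False by simp
  have "c * cinner y x = complex_of_real ((cmod (cinner x y))^2 / (norm x)^2)"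
  proof -
    have "c * cinner y x = (cinner x y * cnj (cinner x y)) / complex_of_real ((norm x)^2)"
      unfolding c_def by (subst cinner_conj[of y x]) simp
    also have "cinner x y * cnj (cinner x y) = complex_of_real ((cmod (cinner x y))^2)"
      by (simp only: complex_norm_square)
    finally show ?thesis by (simp only: of_real_divide)
  qed
  moreover have "(cmod c)^2 * (norm x)^2 = (cmod (cinner x y))^2 / (norm x)^2"
  proof -
    have "cmod c = cmod (cinner x y) / (norm x)^2"
      unfolding c_def by (simp only: norm_divide norm_of_real) simp
    then show ?thesis using nx by (simp add: power_divide power2_eq_square)
  qed
  ultimately have "0 \<le> (norm y)^2 - (cmod (cinner x y))^2 / (norm x)^2"
    using norm_diff_scaleC_sq[of y c x] by (metis Re_complex_of_real add_diff_cancel_left' diff_add_cancel diff_diff_eq2 mult_2 zero_le_power2 le_diff_eq)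
  then have "(cmod (cinner x y))^2 \<le> (norm y)^2 * (norm x)^2" using nx by (simp add: field_simps)
  then have "(cmod (cinner x y))^2 \<le> (norm x * norm y)^2" by (simp add: power_mult_distrib mult.commute)
  then show ?thesis by (simp add: power2_le_iff_abs_le)
qed



definition orthonormal :: "'a::complex_inner set \<Rightarrow> bool" where
  "orthonormal E \<longleftrightarrow> (\<forall>e\<in>E. norm e = 1) \<and> (\<forall>e\<in>E. \<forall>f\<in>E. e \<noteq> f \<longrightarrow> cinner e f = 0)"

definition proj :: "'a::complex_inner set \<Rightarrow> 'a \<Rightarrow> 'a" where
  "proj E x = (\<Sum>e\<in>E. cinner e x *\<^sub>C e)"

lemma orthonormal_cinner_self: "orthonormal E \<Longrightarrow> e \<in> E \<Longrightarrow> cinner e e = 1"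
  by (simp add: orthonormal_def cinner_self)

lemma cinner_proj:
  assumes "finite E" "orthonormal E" "e \<in> E"
  shows "cinner e (proj E x) = cinner e x"
proof -
  have "cinner e (proj E x) = (\<Sum>f\<in>E. cinner f x * cinner e f)"
    by (simp add: proj_def cinner_sum_right cinner_scaleC_right)
  also have "\<dots> = (\<Sum>f\<in>E. if f = e then cinner e x else 0)"
    using assms by (intro sum.cong) (auto simp: orthonormal_def cinner_self)
  also have "\<dots> = cinner e x" using assms by simp
  finally show ?thesis .
qed

lemma cinner_diff_proj:
  assumes "finite E" "orthonormal E" "e \<in> E"
  shows "cinner e (x - proj E x) = 0"
  using cinner_proj[OF assms] by (simp add: cinner_diff_right)

lemma cinner_proj_diff_proj:
  assumes "finite E" "orthonormal E"
  shows "cinner (proj E x) (y - proj E y) = 0"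
  unfolding proj_def[of E x]
  using cinner_diff_proj[OF assms] by (simp add: cinner_sum_left cinner_scaleC_left)

lemma norm_proj_pyth:
  assumes "finite E" "orthonormal E"
  shows "(norm x)^2 = (norm (proj E x))^2 + (norm (x - proj E x))^2"
  using pythagoras[OF cinner_proj_diff_proj[OF assms, of x x]] by simp

lemma norm_proj_le:
  assumes "finite E" "orthonormal E"
  shows "norm (proj E x) \<le> norm x"
  using norm_proj_pyth[OF assms, of x] by (metis le_add_same_cancel1 norm_ge_zero power2_le_iff_abs_le abs_norm_cancel zero_le_power2)

lemma norm_diff_proj_le:
  assumes "finite E" "orthonormal E"
  shows "norm (x - proj E x) \<le> norm x"
  using norm_proj_pyth[OF assms, of x] by (metis le_add_same_cancel2 norm_ge_zero power2_le_iff_abs_le abs_norm_cancel zero_le_power2)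

lemma proj_add: "proj E (x + y) = proj E x + proj E y"
  by (simp add: proj_def cinner_add_right scaleC_add_left sum.distrib)

lemma proj_scaleC: "proj E (c *\<^sub>C x) = c *\<^sub>C proj E x"
  by (simp add: proj_def cinner_scaleC_right scaleC_sum_right scaleC_scaleC)

lemma proj_scaleR: "proj E (r *\<^sub>R x) = r *\<^sub>R proj E x"
  by (simp add: scaleR_scaleC proj_scaleC)

lemma proj_zero [simp]: "proj E 0 = 0"
  by (simp add: proj_def)

lemma proj_diff: "proj E (x - y) = proj E x - proj E y"
  by (metis add_diff_cancel proj_add diff_add_cancel)

lemma proj_orth: "(\<And>e. e \<in> E \<Longrightarrow> cinner e x = 0) \<Longrightarrow> proj E x = 0"
  by (simp add: proj_def)

lemma proj_selfadj: "cinner (proj E x) y = cinner x (proj E y)"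
  by (simp add: proj_def cinner_sum_left cinner_sum_right cinner_scaleC_left cinner_scaleC_right
      mult.commute) (metis cinner_conj)

lemma bounded_linear_proj:
  assumes "finite E" "orthonormal E"
  shows "bounded_linear (proj E)"
proof
  show "proj E (x + y) = proj E x + proj E y" for x y by (rule proj_add)
  show "proj E (r *\<^sub>R x) = r *\<^sub>R proj E x" for r x by (rule proj_scaleR)
  show "\<exists>K. \<forall>x. norm (proj E x) \<le> norm x * K"
    using norm_proj_le[OF assms] by (intro exI[of _ 1]) simp
qed

lemma cmod_cinner_unit: "norm e = 1 \<Longrightarrow> cmod (cinner e x) \<le> norm x"
  using cauchy_schwarz[of e x] by simp

section \<open>Gram-Schmidt\<close>

lemma gram_schmidt:
  assumes "finite A"
  shows "\<exists>E. finite E \<and> orthonormal (E::'a::complex_inner set) \<and> (\<forall>a\<in>A. proj E a = a)"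
  using assms
proof (induction A rule: finite_induct)
  case empty
  show ?case by (intro exI[of _ "{}"]) (simp add: orthonormal_def)
next
  case (insert a A)
  then obtain E where E: "finite E" "orthonormal E" "\<forall>b\<in>A. proj E b = b" by blast
  define r where "r = a - proj E a"
  show ?case
  proof (cases "r = 0")
    case True
    then show ?thesis using E by (intro exI[of _ E]) (simp add: r_def)
  next
    case False
    define u where "u = complex_of_real (1 / norm r) *\<^sub>C r"
    have nr: "norm r > 0" using False by simp
    have nu: "norm u = 1" using nr by (simp add: u_def norm_scaleC norm_divide)
    have ue: "cinner e u = 0" if "e \<in> E" for e
      using cinner_diff_proj[OF E(1,2) that, of a] by (simp add: u_def r_def cinner_scaleC_right)
    have uE: "u \<notin> E" using ue nu by (metis cinner_self_eq_0 norm_zero zero_neq_one)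
    have on: "orthonormal (insert u E)"
      using E(2) nu ue uE unfolding orthonormal_def by (metis cinner_conj complex_cnj_zero insert_iff)
    have pins: "proj (insert u E) x = cinner u x *\<^sub>C u + proj E x" for x
      using E(1) uE by (simp add: proj_def)
    have "\<forall>b\<in>insert a A. proj (insert u E) b = b"
    proof
      fix b assume b: "b \<in> insert a A"
      show "proj (insert u E) b = b"
      proof (cases "b = a")
        case True
        have "cinner u a = cinner u r"
          unfolding r_def cinner_diff_right
          using cinner_proj_diff_proj[OF E(1,2), of a a]
          by (simp add: u_def cinner_scaleC_left)
             (metis cinner_conj complex_cnj_zero mult_zero_right r_def)
        also have "\<dots> = complex_of_real (norm r)"
          using nr by (simp add: u_def cinner_scaleC_left cinner_self power2_eq_square)
        finally have "cinner u a *\<^sub>C u = r"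
          using nr by (simp add: u_def scaleC_scaleC scaleC_one)
        then show ?thesis using True by (simp add: pins r_def)
      next
        case False
        then have bA: "b \<in> A" using b by simp
        have "cinner u b = cinner u (proj E b)" using E(3) bA by simp
        also have "\<dots> = 0"
          unfolding proj_def cinner_sum_right
          by (intro sum.neutral) (auto simp: cinner_scaleC_right ue cinner_conj[of u])
        finally show ?thesis using E(3) bA by (simp add: pins)
      qed
    qed
    then show ?thesis using E(1) on by (intro exI[of _ "insert u E"]) simp
  qed
qed

definition lin :: "'a::complex_vector set \<Rightarrow> 'a set" where
  "lin A = {x. \<exists>c. x = (\<Sum>a\<in>A. c a *\<^sub>C a)}"

lemma lin_add: "x \<in> lin A \<Longrightarrow> y \<in> lin A \<Longrightarrow> x + y \<in> lin A"
proof -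
  assume "x \<in> lin A" "y \<in> lin A"
  then obtain c c' where "x = (\<Sum>a\<in>A. c a *\<^sub>C a)" "y = (\<Sum>a\<in>A. c' a *\<^sub>C a)"
    by (auto simp: lin_def)
  then have "x + y = (\<Sum>a\<in>A. (c a + c' a) *\<^sub>C a)"
    by (simp add: sum.distrib scaleC_add_left)
  then show ?thesis by (auto simp: lin_def)
qed

lemma lin_scaleC: "x \<in> lin A \<Longrightarrow> d *\<^sub>C x \<in> lin A"
proof -
  assume "x \<in> lin A"
  then obtain c where "x = (\<Sum>a\<in>A. c a *\<^sub>C a)" by (auto simp: lin_def)
  then have "d *\<^sub>C x = (\<Sum>a\<in>A. (d * c a) *\<^sub>C a)"
    by (simp add: scaleC_sum_right scaleC_scaleC)
  then show ?thesis by (auto simp: lin_def)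
qed

lemma lin_insert:
  assumes "finite A" "a \<notin> A" "y \<in> lin A"
  shows "d *\<^sub>C a + y \<in> lin (insert a A)"
proof -
  from assms obtain c where c: "y = (\<Sum>b\<in>A. c b *\<^sub>C b)" by (auto simp: lin_def)
  have "(\<Sum>b\<in>A. (c(a := d)) b *\<^sub>C b) = (\<Sum>b\<in>A. c b *\<^sub>C b)"
    using assms by (intro sum.cong) auto
  then have "d *\<^sub>C a + y = (\<Sum>b\<in>insert a A. (c(a := d)) b *\<^sub>C b)"
    using assms c by simp
  then show ?thesis unfolding lin_def by blast
qed

lemma lin_empty: "lin {} = {0}"
  by (simp add: lin_def)

lemma proj_fixes_lin:
  assumes "\<forall>a\<in>A. proj E a = a" "x \<in> lin A"
  shows "proj E x = x"
proof -
  from assms obtain c where c: "x = (\<Sum>a\<in>A. c a *\<^sub>C a)" by (auto simp: lin_def)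
  have "proj E (\<Sum>a\<in>A. c a *\<^sub>C a) = (\<Sum>a\<in>A. c a *\<^sub>C a)"
    using assms(1)
  proof (induction A rule: infinite_finite_induct)
    case (insert a A)
    then show ?case by (simp add: proj_add proj_scaleC)
  qed auto
  then show ?thesis using c by simp
qed

lemma continuous_scaleC_left: "continuous_on UNIV (\<lambda>c::complex. c *\<^sub>C (e::'a::complex_inner))"
proof -
  have "bounded_linear (\<lambda>c::complex. c *\<^sub>C e)"
  proof
    show "(x + y) *\<^sub>C e = x *\<^sub>C e + y *\<^sub>C e" for x y by (rule scaleC_add_left)
    show "(r *\<^sub>R x) *\<^sub>C e = r *\<^sub>R (x *\<^sub>C e)" for r x
      by (simp add: scaleR_scaleC scaleC_scaleC scaleR_conv_of_real)
    show "\<exists>K. \<forall>x. norm (x *\<^sub>C e) \<le> norm x * K"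
      by (intro exI[of _ "norm e"]) (simp add: norm_scaleC)
  qed
  then show ?thesis by (simp add: linear_continuous_on)
qed

definition coefset :: "'a::complex_vector set \<Rightarrow> 'a set" where
  "coefset E = {x. \<exists>c. (\<forall>e\<in>E. cmod (c e) \<le> 1) \<and> x = (\<Sum>e\<in>E. c e *\<^sub>C e)}"

lemma compact_coefset:
  assumes "finite E"
  shows "compact (coefset (E::'a::complex_inner set))"
  using assms
proof (induction E rule: finite_induct)
  case empty
  have "coefset ({}::'a set) = {0}" by (auto simp: coefset_def)
  then show ?case by simp
next
  case (insert e E)
  have eq: "coefset (insert e E) = (\<lambda>p. fst p *\<^sub>C e + snd p) ` (cball 0 1 \<times> coefset E)"
  proof (intro equalityI subsetI)
    fix x assume "x \<in> coefset (insert e E)"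
    then obtain c where c: "\<forall>f\<in>insert e E. cmod (c f) \<le> 1" "x = (\<Sum>f\<in>insert e E. c f *\<^sub>C f)"
      by (auto simp: coefset_def)
    then have "x = c e *\<^sub>C e + (\<Sum>f\<in>E. c f *\<^sub>C f)" using insert by simp
    moreover have "(\<Sum>f\<in>E. c f *\<^sub>C f) \<in> coefset E" using c(1) by (auto simp: coefset_def)
    moreover have "c e \<in> cball 0 1" using c(1) by simp
    ultimately show "x \<in> (\<lambda>p. fst p *\<^sub>C e + snd p) ` (cball 0 1 \<times> coefset E)"
      by (intro image_eqI[of _ _ "(c e, \<Sum>f\<in>E. c f *\<^sub>C f)"]) auto
  next
    fix x assume "x \<in> (\<lambda>p. fst p *\<^sub>C e + snd p) ` (cball 0 1 \<times> coefset E)"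
    then obtain d c where x: "x = d *\<^sub>C e + (\<Sum>f\<in>E. c f *\<^sub>C f)" "cmod d \<le> 1" "\<forall>f\<in>E. cmod (c f) \<le> 1"
      by (auto simp: coefset_def)
    have "(\<Sum>f\<in>E. (c(e := d)) f *\<^sub>C f) = (\<Sum>f\<in>E. c f *\<^sub>C f)"
      using insert.hyps by (intro sum.cong) auto
    then have "x = (\<Sum>f\<in>insert e E. (c(e := d)) f *\<^sub>C f)"
      using insert x by simp
    moreover have "\<forall>f\<in>insert e E. cmod ((c(e := d)) f) \<le> 1" using x by auto
    ultimately show "x \<in> coefset (insert e E)" unfolding coefset_def by blast
  qed
  have "continuous_on (cball 0 1 \<times> coefset E) (\<lambda>p. fst p *\<^sub>C e + snd p)"
    by (intro continuous_intros continuous_on_compose2[OF continuous_scaleC_left[of e]]) auto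
  then show ?case unfolding eq
    by (intro compact_continuous_image compact_Times insert.IH) auto
qed

lemma proj_in_coefset:
  assumes "orthonormal E" "norm x \<le> 1"
  shows "proj E x \<in> coefset E"
  using assms cmod_cinner_unit[of _ x] unfolding coefset_def proj_def orthonormal_def
  by (intro CollectI exI[of _ "\<lambda>e. cinner e x"]) force



lemma csubspace_0: "csubspace M \<Longrightarrow> 0 \<in> M"
  by (simp add: csubspace_def)

lemma csubspace_add: "csubspace M \<Longrightarrow> x \<in> M \<Longrightarrow> y \<in> M \<Longrightarrow> x + y \<in> M"
  by (simp add: csubspace_def)

lemma csubspace_scaleC: "csubspace M \<Longrightarrow> x \<in> M \<Longrightarrow> c *\<^sub>C x \<in> M"
  by (simp add: csubspace_def)

lemma csubspace_minus: "csubspace M \<Longrightarrow> x \<in> M \<Longrightarrow> - x \<in> M"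
  using csubspace_scaleC[of M x "-1"] by (simp add: scaleC_minus_left scaleC_one)

lemma csubspace_diff: "csubspace M \<Longrightarrow> x \<in> M \<Longrightarrow> y \<in> M \<Longrightarrow> x - y \<in> M"
  by (metis csubspace_add csubspace_minus diff_conv_add_uminus)

lemma csubspace_scaleR: "csubspace M \<Longrightarrow> x \<in> M \<Longrightarrow> r *\<^sub>R x \<in> M"
  by (simp add: csubspace_scaleC scaleR_scaleC)

lemma bounded_linear_cinner_right: "bounded_linear (\<lambda>x. cinner (a::'a::complex_inner) x)"
proof
  show "cinner a (x + y) = cinner a x + cinner a y" for x y by (rule cinner_add_right)
  show "cinner a (r *\<^sub>R x) = r *\<^sub>R cinner a x" for r x
    by (simp add: cinner_scaleR_right scaleR_conv_of_real)
  show "\<exists>K. \<forall>x. norm (cinner a x) \<le> norm x * K"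
    using cauchy_schwarz[of a] by (intro exI[of _ "norm a"]) (simp add: mult.commute)
qed

lemma bounded_linear_cinner_left: "bounded_linear (\<lambda>x. cinner x (a::'a::complex_inner))"
proof
  show "cinner (x + y) a = cinner x a + cinner y a" for x y by (rule cinner_add_left)
  show "cinner (r *\<^sub>R x) a = r *\<^sub>R cinner x a" for r x
    by (simp add: cinner_scaleR_left scaleR_conv_of_real)
  show "\<exists>K. \<forall>x. norm (cinner x a) \<le> norm x * K"
    using cauchy_schwarz[of _ a] by (intro exI[of _ "norm a"]) simp
qed

lemma continuous_on_cinner_right: "continuous_on S (\<lambda>x. cinner (a::'a::complex_inner) x)"
  using bounded_linear_cinner_right linear_continuous_on by blast

lemma continuous_on_cinner_left: "continuous_on S (\<lambda>x. cinner x (a::'a::complex_inner))"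
  using bounded_linear_cinner_left linear_continuous_on by blast

lemma closed_orth: "closed {x::'a::complex_inner. \<forall>e\<in>E. cinner e x = 0}"
proof -
  have "{x::'a. \<forall>e\<in>E. cinner e x = 0} = (\<Inter>e\<in>E. {x. cinner e x = 0})" by auto
  moreover have "closed {x::'a. cinner e x = 0}" for e
    using continuous_closed_preimage_constant[OF continuous_on_cinner_right[of UNIV e], of 0]
    by (simp add: vimage_def)
  ultimately show ?thesis by auto
qed

lemma csubspace_orth: "csubspace {x::'a::complex_inner. \<forall>e\<in>E. cinner e x = 0}"
  by (simp add: csubspace_def cinner_add_right cinner_scaleC_right)

lemma csubspace_Int: "csubspace M \<Longrightarrow> csubspace N \<Longrightarrow> csubspace (M \<inter> N)"
  by (simp add: csubspace_def)

lemma lin_gen: "finite A \<Longrightarrow> a \<in> A \<Longrightarrow> a \<in> lin A"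
proof -
  assume "finite A" "a \<in> A"
  then have "(\<Sum>b\<in>A. (if b = a then 1 else 0) *\<^sub>C b) = a"
    by (simp add: if_distrib[of "\<lambda>c. c *\<^sub>C _"] scaleC_one cong: if_cong)
  then have eq: "a = (\<Sum>b\<in>A. (if b = a then 1 else 0) *\<^sub>C b)" by simp
  show ?thesis unfolding lin_def mem_Collect_eq by (rule exI[of _ "\<lambda>b. if b = a then 1 else 0"], rule eq)
qed

lemma lin_insert':
  assumes "finite A" "y \<in> lin A"
  shows "d *\<^sub>C a + y \<in> lin (insert a A)"
proof (cases "a \<in> A")
  case True
  then show ?thesis using assms lin_gen[OF assms(1) True]
    by (simp add: insert_absorb lin_add lin_scaleC)
next
  case False
  then show ?thesis using lin_insert assms by blast
qed

lemma fin_dim_span: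
  assumes "finite E" "csubspace N" "\<forall>n\<in>N. (\<forall>e\<in>E. cinner e n = 0) \<longrightarrow> n = 0"
  shows "\<exists>A. finite A \<and> N \<subseteq> lin (A::'a::complex_inner set)"
  using assms
proof (induction E arbitrary: N rule: finite_induct)
  case empty
  then have "N \<subseteq> lin {}" by (auto simp: lin_empty)
  then show ?case by blast
next
  case (insert e E)
  define N' where "N' = N \<inter> {n. \<forall>f\<in>{e}. cinner f n = 0}"
  have N': "csubspace N'" unfolding N'_def by (intro csubspace_Int insert.prems csubspace_orth)
  have "\<forall>n\<in>N'. (\<forall>f\<in>E. cinner f n = 0) \<longrightarrow> n = 0" using insert.prems by (auto simp: N'_def)
  then obtain A' where A': "finite A'" "N' \<subseteq> lin A'" using insert.IH[OF N'] by blast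
  show ?case
  proof (cases "\<forall>n\<in>N. cinner e n = 0")
    case True
    then have "N \<subseteq> N'" by (auto simp: N'_def)
    then show ?thesis using A' by blast
  next
    case False
    then obtain x1 where x1: "x1 \<in> N" "cinner e x1 \<noteq> 0" by blast
    define x0 where "x0 = (1 / cinner e x1) *\<^sub>C x1"
    have x0: "x0 \<in> N" "cinner e x0 = 1"
      using x1 insert.prems(1) by (auto simp: x0_def csubspace_scaleC cinner_scaleC_right)
    have "N \<subseteq> lin (insert x0 A')"
    proof
      fix n assume n: "n \<in> N"
      have "n - cinner e n *\<^sub>C x0 \<in> N'"
        using n x0 insert.prems(1)
        by (auto simp: N'_def csubspace_diff csubspace_scaleC cinner_diff_right cinner_scaleC_right)
      then have "n - cinner e n *\<^sub>C x0 \<in> lin A'" using A' by blast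
      from lin_insert'[OF A'(1) this, of "cinner e n" x0] show "n \<in> lin (insert x0 A')" by simp
    qed
    then show ?thesis using A' by blast
  qed
qed

lemma compact_fd_ball:
  assumes "finite E" "csubspace N" "closed N" "\<forall>n\<in>N. (\<forall>e\<in>E. cinner e n = 0) \<longrightarrow> n = 0"
  shows "compact (N \<inter> cball (0::'a::complex_inner) 1)"
proof -
  obtain A where A: "finite A" "N \<subseteq> lin (A::'a set)" using fin_dim_span[OF assms(1,2,4)] by blast
  obtain E' where E': "finite E'" "orthonormal E'" "\<forall>a\<in>A. proj E' a = a"
    using gram_schmidt[OF A(1)] by blast
  have "N \<inter> cball 0 1 \<subseteq> coefset E'"
  proof
    fix x assume x: "x \<in> N \<inter> cball 0 1"
    then have "proj E' x = x" using proj_fixes_lin[OF E'(3)] A(2) by blast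
    moreover have "proj E' x \<in> coefset E'" using x E'(2) by (intro proj_in_coefset) auto
    ultimately show "x \<in> coefset E'" by simp
  qed
  then have "N \<inter> cball 0 1 = coefset E' \<inter> (N \<inter> cball 0 1)" by blast
  also have "compact \<dots>" using compact_coefset[OF E'(1)] assms(3) by (intro compact_Int_closed) auto
  finally show ?thesis .
qed

section \<open>Projection theorem and Riesz representation\<close>

lemma variational_orth:
  assumes "\<And>c. (norm z)^2 \<le> (norm (z - c *\<^sub>C v))^2"
  shows "cinner v (z::'a::complex_inner) = 0"
proof (cases "v = 0")
  case True then show ?thesis by simp
next
  case False
  define c where "c = cinner v z / complex_of_real ((norm v)^2)"
  have nv: "norm v > 0" using False by simp
  have "c * cinner z v = complex_of_real ((cmod (cinner v z))^2 / (norm v)^2)"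
  proof -
    have "c * cinner z v = (cinner v z * cnj (cinner v z)) / complex_of_real ((norm v)^2)"
      unfolding c_def by (subst cinner_conj[of z v]) simp
    also have "cinner v z * cnj (cinner v z) = complex_of_real ((cmod (cinner v z))^2)"
      by (simp only: complex_norm_square)
    finally show ?thesis by (simp only: of_real_divide)
  qed
  moreover have "(cmod c)^2 * (norm v)^2 = (cmod (cinner v z))^2 / (norm v)^2"
  proof -
    have "cmod c = cmod (cinner v z) / (norm v)^2"
      unfolding c_def by (simp only: norm_divide norm_of_real) simp
    then show ?thesis using nv by (simp add: power_divide power2_eq_square)
  qed
  ultimately have "(norm (z - c *\<^sub>C v))^2 = (norm z)^2 - (cmod (cinner v z))^2 / (norm v)^2"
    using norm_diff_scaleC_sq[of z c v] by simp
  then have "(cmod (cinner v z))^2 / (norm v)^2 \<le> 0" using assms[of c] by simp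
  then have "(cmod (cinner v z))^2 \<le> 0" using nv by (simp add: divide_le_0_iff)
  then show ?thesis by simp
qed

lemma parallelogram:
  "(norm (x + y))^2 + (norm (x - y))^2 = 2 * (norm x)^2 + 2 * (norm (y::'a::complex_inner))^2"
  by (simp add: norm_add_sq norm_diff_sq)

lemma projection_theorem:
  fixes V :: "'a::chilbert_space set"
  assumes V: "csubspace V" "closed V"
  shows "\<exists>p\<in>V. \<forall>v\<in>V. cinner v (x - p) = 0"
proof -
  define d where "d = infdist x V"
  have Vne: "V \<noteq> {}" using csubspace_0[OF V(1)] by blast
  have d0: "d \<ge> 0" by (simp add: d_def infdist_nonneg)
  have dle: "d \<le> norm (x - v)" if "v \<in> V" for v
    using infdist_le[OF that, of x] by (simp add: d_def dist_norm)
  have ex: "\<exists>v\<in>V. (norm (x - v))^2 < d^2 + 1 / (Suc n)" for n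
  proof (rule ccontr)
    assume "\<not> ?thesis"
    then have "\<forall>v\<in>V. sqrt (d^2 + 1 / Suc n) \<le> dist x v"
      by (auto simp: dist_norm real_le_lsqrt not_less)
    then have "sqrt (d^2 + 1 / Suc n) \<le> d"
      unfolding d_def infdist_notempty[OF Vne] by (intro cINF_greatest Vne) auto
    moreover have "d < sqrt (d^2 + 1 / Suc n)"
      using d0 by (intro real_less_rsqrt) simp
    ultimately show False by simp
  qed
  obtain v where v: "\<And>n. v n \<in> V" "\<And>n. (norm (x - v n))^2 < d^2 + 1 / Suc n"
    using ex by metis
  have key: "(norm (v n - v m))^2 \<le> 2 / Suc n + 2 / Suc m" for n m
  proof -
    have mid: "(1/2) *\<^sub>R (v n + v m) \<in> V"
      using v(1) V(1) by (intro csubspace_scaleR csubspace_add) auto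
    have "(norm ((x - v n) + (x - v m)))^2 = (2 * norm (x - (1/2) *\<^sub>R (v n + v m)))^2"
    proof -
      have "(x - v n) + (x - v m) = 2 *\<^sub>R (x - (1/2) *\<^sub>R (v n + v m))"
        by (simp add: algebra_simps scaleR_2)
      then show ?thesis by simp
    qed
    also have "\<dots> \<ge> (2 * d)^2" using dle[OF mid] d0 by (intro power_mono) auto
    finally have A: "(norm ((x - v n) + (x - v m)))^2 \<ge> 4 * d^2" by (simp add: power_mult_distrib)
    have "(norm (v n - v m))^2 = (norm ((x - v m) - (x - v n)))^2" by (simp add: algebra_simps)
    also have "\<dots> = 2 * (norm (x - v n))^2 + 2 * (norm (x - v m))^2 - (norm ((x - v n) + (x - v m)))^2"
      using parallelogram[of "x - v m" "x - v n"] by (simp add: add.commute)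
    finally show ?thesis using A v(2)[of n] v(2)[of m] by linarith
  qed
  have "Cauchy v"
  proof (rule CauchyI)
    fix e :: real assume e: "e > 0"
    obtain N :: nat where N: "4 / e^2 < N" using reals_Archimedean2 by blast
    show "\<exists>M. \<forall>m\<ge>M. \<forall>n\<ge>M. norm (v m - v n) < e"
    proof (intro exI allI impI)
      fix m n assume mn: "N \<le> m" "N \<le> n"
      have "2 / Suc m \<le> 2 / Suc N" "2 / Suc n \<le> 2 / Suc N"
        using mn by (auto intro!: divide_left_mono)
      moreover have "4 / Suc N < e^2"
      proof -
        have "4 / e^2 < Suc N" using N by simp
        then show ?thesis using e by (simp add: field_simps)
      qed
      ultimately have "(norm (v m - v n))^2 < e^2" using key[of m n] by linarith
      then show "norm (v m - v n) < e" using e by (simp add: power_less_imp_less_base)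
    qed
  qed
  then obtain p where p: "v \<longlonglongrightarrow> p" using Cauchy_convergent_iff convergent_def by blast
  have pV: "p \<in> V" using V(2) v(1) p closed_sequentially by blast
  have "(\<lambda>n. (norm (x - v n))^2) \<longlonglongrightarrow> (norm (x - p))^2"
    by (intro tendsto_intros p)
  moreover have "(\<lambda>n. d^2 + 1 / Suc n) \<longlonglongrightarrow> d^2 + 0"
    using LIMSEQ_inverse_real_of_nat by (intro tendsto_intros) (simp add: inverse_eq_divide)
  ultimately have pd: "(norm (x - p))^2 \<le> d^2"
    using v(2) by (intro LIMSEQ_le[of _ _ "\<lambda>n. d^2 + 1 / Suc n"]) (auto intro: less_imp_le)
  show ?thesis
  proof (intro bexI[OF _ pV] ballI)
    fix w assume w: "w \<in> V"
    show "cinner w (x - p) = 0"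
    proof (rule variational_orth)
      fix c
      have "p + c *\<^sub>C w \<in> V" using w pV V(1) by (intro csubspace_add csubspace_scaleC)
      then have "d \<le> norm (x - (p + c *\<^sub>C w))" by (rule dle)
      then have "d^2 \<le> (norm (x - p - c *\<^sub>C w))^2" using d0 by (simp add: power_mono diff_diff_eq)
      then show "(norm (x - p))^2 \<le> (norm (x - p - c *\<^sub>C w))^2" using pd by linarith
    qed
  qed
qed

lemma riesz:
  fixes \<phi> :: "'a::chilbert_space \<Rightarrow> complex"
  assumes add: "\<And>x y. \<phi> (x + y) = \<phi> x + \<phi> y" and sc: "\<And>c x. \<phi> (c *\<^sub>C x) = c * \<phi> x"
    and cont: "continuous_on UNIV \<phi>"
  shows "\<exists>r. \<forall>y. \<phi> y = cinner r y"
proof (cases "\<forall>x. \<phi> x = 0")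
  case True then show ?thesis by (intro exI[of _ 0]) simp
next
  case False
  then obtain x where x: "\<phi> x \<noteq> 0" by blast
  define K where "K = {v. \<phi> v = 0}"
  have minus: "\<phi> (- v) = - \<phi> v" for v using sc[of "-1" v] by (simp add: scaleC_minus_left scaleC_one)
  have diff: "\<phi> (v - w) = \<phi> v - \<phi> w" for v w unfolding diff_conv_add_uminus by (simp only: add minus)
  have K: "csubspace K" "closed K"
    unfolding K_def csubspace_def using add sc
    by (auto intro!: continuous_closed_preimage_constant[OF cont, simplified]
        simp: sc[of 0 0, simplified] closed_Collect_eq cont continuous_on_const)
  obtain p where p: "p \<in> K" "\<forall>k\<in>K. cinner k (x - p) = 0" using projection_theorem[OF K] by blast
  define w where "w = x - p"
  have pw: "\<phi> w = \<phi> x" using p(1) by (simp add: w_def diff K_def)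
  then have w0: "w \<noteq> 0" using x by (metis add_cancel_right_right add diff_self diff_zero)
  show ?thesis
  proof (intro exI allI)
    fix y
    have "\<phi> y *\<^sub>C w - \<phi> w *\<^sub>C y \<in> K" by (simp add: K_def diff sc mult.commute)
    then have "cinner (\<phi> y *\<^sub>C w - \<phi> w *\<^sub>C y) w = 0" using p(2) by (simp add: w_def)
    then have "cnj (\<phi> y) * cinner w w = cnj (\<phi> w) * cinner y w"
      by (simp add: cinner_diff_left cinner_scaleC_left)
    then have "\<phi> y * cinner w w = \<phi> w * cinner w y"
      by (metis cinner_conj complex_cnj_cnj complex_cnj_mult)
    then have "\<phi> y = \<phi> w * cinner w y / cinner w w" using w0 by (simp add: field_simps)
    also have "\<dots> = cinner ((cnj (\<phi> w) / cinner w w) *\<^sub>C w) y"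
      by (simp add: cinner_scaleC_left cinner_self)
    finally show "\<phi> y = cinner ((cnj (\<phi> w) / cinner w w) *\<^sub>C w) y" .
  qed
qed



instantiation prod :: (complex_inner, complex_inner) complex_inner
begin
definition cinner_prod_def: "cinner x y = cinner (fst x) (fst y) + cinner (snd x) (snd y)"
instance
proof
  fix x y z :: "'a \<times> 'b" and a :: complex
  show "cinner x y = cnj (cinner y x)"
    by (simp add: cinner_prod_def) (metis cinner_conj)
  show "cinner x (y + z) = cinner x y + cinner x z"
    by (simp add: cinner_prod_def cinner_add_right)
  show "cinner x (a *\<^sub>C y) = a * cinner x y"
    by (simp add: cinner_prod_def scaleC_prod_def cinner_scaleC_right distrib_left)
  show "norm x = sqrt (Re (cinner x x))"
    by (simp add: cinner_prod_def norm_prod_def Re_cinner_self)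
qed
end

instance prod :: (chilbert_space, chilbert_space) chilbert_space ..

lemma cinner_Pair: "cinner (a, b) (c, d) = cinner a c + cinner b d"
  by (simp add: cinner_prod_def)

declare bounded_linear_cinner_right[bounded_linear] bounded_linear_cinner_left[bounded_linear]

lemma bounded_linear_scaleC_right[bounded_linear]: "bounded_linear (\<lambda>x::'a::complex_inner. c *\<^sub>C x)"
proof
  show "c *\<^sub>C (x + y) = c *\<^sub>C x + c *\<^sub>C y" for x y :: 'a by (rule scaleC_add_right)
  show "c *\<^sub>C (r *\<^sub>R x) = r *\<^sub>R (c *\<^sub>C x)" for r and x :: 'a
    by (simp add: scaleR_scaleC scaleC_scaleC mult.commute)
  show "\<exists>K. \<forall>x::'a. norm (c *\<^sub>C x) \<le> norm x * K"
    by (intro exI[of _ "cmod c"] allI) (simp add: norm_scaleC mult.commute)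
qed

lemma cspan_sum_eq:
  assumes "finite A" "F \<subseteq> A"
  shows "(\<Sum>v\<in>F. c v *\<^sub>C v) = (\<Sum>v\<in>A. (if v \<in> F then c v else 0) *\<^sub>C (v::'a::complex_vector))"
proof -
  have "(\<Sum>v\<in>A. (if v \<in> F then c v else 0) *\<^sub>C v) = (\<Sum>v\<in>A. if v \<in> F then c v *\<^sub>C v else 0)"
    by (intro sum.cong) auto
  also have "\<dots> = (\<Sum>v\<in>A \<inter> F. c v *\<^sub>C v)" using assms by (simp add: sum.inter_restrict)
  also have "A \<inter> F = F" using assms by auto
  finally show ?thesis by simp
qed

lemma csubspace_cspan: "csubspace (cspan (U::'a::complex_vector set))"
  unfolding csubspace_def
proof (intro conjI ballI allI)
  show "0 \<in> cspan U" unfolding cspan_def by (intro CollectI exI[of _ "{}"]) simp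
next
  fix x y assume "x \<in> cspan U" "y \<in> cspan U"
  then obtain F c G d where FG: "finite F" "F \<subseteq> U" "x = (\<Sum>v\<in>F. c v *\<^sub>C v)"
    "finite G" "G \<subseteq> U" "y = (\<Sum>v\<in>G. d v *\<^sub>C v)" unfolding cspan_def by blast
  have xy: "x + y = (\<Sum>v\<in>F \<union> G. ((if v \<in> F then c v else 0) + (if v \<in> G then d v else 0)) *\<^sub>C v)"
  proof -
    have "x = (\<Sum>v\<in>F \<union> G. (if v \<in> F then c v else 0) *\<^sub>C v)"
      using FG(1,3,4) cspan_sum_eq[of "F \<union> G" F c] by auto
    moreover have "y = (\<Sum>v\<in>F \<union> G. (if v \<in> G then d v else 0) *\<^sub>C v)"
      using FG(1,4,6) cspan_sum_eq[of "F \<union> G" G d] by auto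
    ultimately show ?thesis by (simp only: scaleC_add_left sum.distrib)
  qed
  have fin: "finite (F \<union> G)" "F \<union> G \<subseteq> U" using FG by auto
  show "x + y \<in> cspan U" unfolding cspan_def mem_Collect_eq
    by (intro exI[of _ "F \<union> G"] exI[of _ "\<lambda>v. (if v \<in> F then c v else 0) + (if v \<in> G then d v else 0)"] conjI fin xy)
next
  fix a x assume "x \<in> cspan U"
  then obtain F c where F: "finite F" "F \<subseteq> U" "x = (\<Sum>v\<in>F. c v *\<^sub>C v)" unfolding cspan_def by blast
  then have eq: "a *\<^sub>C x = (\<Sum>v\<in>F. (a * c v) *\<^sub>C v)" by (simp add: scaleC_sum_right scaleC_scaleC)
  show "a *\<^sub>C x \<in> cspan U" unfolding cspan_def mem_Collect_eq
    by (intro exI[of _ F] exI[of _ "\<lambda>v. a * c v"] conjI F(1,2) eq)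
qed

lemma cspan_gen: "u \<in> U \<Longrightarrow> u \<in> cspan U"
  unfolding cspan_def by (intro CollectI exI[of _ "{u}"] exI[of _ "\<lambda>_. 1"]) (simp add: scaleC_one)

lemma csubspace_closure:
  assumes "csubspace (M::'a::complex_inner set)"
  shows "csubspace (closure M)"
  unfolding csubspace_def
proof (intro conjI ballI allI)
  show "0 \<in> closure M" using csubspace_0[OF assms] closure_subset by blast
next
  fix x y assume "x \<in> closure M" "y \<in> closure M"
  then obtain xs ys where "\<forall>n. xs n \<in> M" "xs \<longlonglongrightarrow> x" "\<forall>n. ys n \<in> M" "ys \<longlonglongrightarrow> y"
    unfolding closure_sequential by blast
  then show "x + y \<in> closure M" unfolding closure_sequential
    by (intro exI[of _ "\<lambda>n. xs n + ys n"]) (auto intro: tendsto_intros csubspace_add[OF assms])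
next
  fix c x assume "x \<in> closure M"
  then obtain xs where "\<forall>n. xs n \<in> M" "xs \<longlonglongrightarrow> x" unfolding closure_sequential by blast
  then show "c *\<^sub>C x \<in> closure M" unfolding closure_sequential
    by (intro exI[of _ "\<lambda>n. c *\<^sub>C xs n"]) (auto intro: tendsto_intros csubspace_scaleC[OF assms])
qed

lemma norm_sum_orth_sq:
  assumes "finite F" "\<And>u v. u \<in> F \<Longrightarrow> v \<in> F \<Longrightarrow> u \<noteq> v \<Longrightarrow> cinner (g u) (g v) = 0"
  shows "(norm (\<Sum>v\<in>F. g v :: 'a::complex_inner))^2 = (\<Sum>v\<in>F. (norm (g v))^2)"
  using assms
proof (induction F rule: finite_induct)
  case (insert a F)
  have "cinner (g a) (\<Sum>v\<in>F. g v) = 0"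
    using insert by (auto simp: cinner_sum_right intro!: sum.neutral)
  then show ?case using insert by (simp add: pythagoras)
qed simp

lemma clinear_zero: "clinear f \<Longrightarrow> f 0 = 0"
proof -
  assume "clinear f"
  then have "f ((0::complex) *\<^sub>C 0) = (0::complex) *\<^sub>C f 0" by (simp only: clinear_def)
  then show ?thesis by simp
qed

lemma clinear_sum: "clinear f \<Longrightarrow> f (\<Sum>v\<in>F. c v *\<^sub>C v) = (\<Sum>v\<in>F. c v *\<^sub>C f v)"
proof (induction F rule: infinite_finite_induct)
  case (insert x F)
  then show ?case by (simp add: clinear_def)
qed (auto simp: clinear_zero)

section \<open>A non-attainment criterion\<close>

lemma not_attaining:
  fixes S :: "'a::complex_inner \<Rightarrow>\<^sub>L 'b::complex_inner"
  assumes clin: "clinear (blinfun_apply S)"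
    and Une: "U \<noteq> {}" and Uon: "orthonormal U"
    and Sorth: "\<And>x y. x \<in> U \<Longrightarrow> y \<in> U \<Longrightarrow> x \<noteq> y \<Longrightarrow> cinner (S x) (S y) = 0"
    and Sless: "\<And>x. x \<in> U \<Longrightarrow> (norm (S x))^2 < b"
    and Ssup: "\<And>e. e > 0 \<Longrightarrow> \<exists>x\<in>U. (norm (S x))^2 > b - e"
  shows "csubspace (closure (cspan U)) \<and> closed (closure (cspan U)) \<and> closure (cspan U) \<noteq> {0}
     \<and> \<not> norm_attaining_on (closure (cspan U)) S"
proof -
  define M where "M = closure (cspan U)"
  have Msub: "csubspace M" unfolding M_def by (intro csubspace_closure csubspace_cspan)
  have UM: "U \<subseteq> M" unfolding M_def using cspan_gen closure_subset by blast
  have unit: "norm u = 1" if "u \<in> U" for u using Uon that by (simp add: orthonormal_def)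
  have Mne: "M \<noteq> {0}" using Une UM unit by force
  have clinS: "S (c *\<^sub>C x) = c *\<^sub>C S x" for c x using clin by (simp add: clinear_def)
  have span_id: "cinner (S x) (S w) = complex_of_real ((norm (S x))^2) * cinner x w \<and> (norm (S w))^2 \<le> b * (norm w)^2"
    if x: "x \<in> U" and w: "w \<in> cspan U" for x w
  proof -
    obtain F c where F: "finite F" "F \<subseteq> U" "w = (\<Sum>v\<in>F. c v *\<^sub>C v)" using w unfolding cspan_def by blast
    have Sw: "S w = (\<Sum>v\<in>F. c v *\<^sub>C S v)" using F clinear_sum[OF clin] by simp
    have A: "cinner (S x) (S w) = (\<Sum>v\<in>F. if v = x then c v * complex_of_real ((norm (S x))^2) else 0)"
      unfolding Sw cinner_sum_right using F Sorth x
      by (intro sum.cong) (auto simp: cinner_scaleC_right cinner_self)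
    have B: "cinner x w = (\<Sum>v\<in>F. if v = x then c v else 0)"
      unfolding F(3) cinner_sum_right using F Uon x
      by (intro sum.cong) (auto simp: cinner_scaleC_right orthonormal_def cinner_self)
    have C1: "(norm (S w))^2 = (\<Sum>v\<in>F. (cmod (c v))^2 * (norm (S v))^2)"
      unfolding Sw using F Sorth
      by (subst norm_sum_orth_sq) (auto simp: cinner_scaleC_left cinner_scaleC_right norm_scaleC power_mult_distrib)
    have "(norm w)^2 = (\<Sum>v\<in>F. (cmod (c v))^2 * (norm v)^2)"
      unfolding F(3) using F Uon
      by (subst norm_sum_orth_sq) (auto simp: cinner_scaleC_left cinner_scaleC_right norm_scaleC
          power_mult_distrib orthonormal_def)
    also have "\<dots> = (\<Sum>v\<in>F. (cmod (c v))^2)"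
      using F Uon by (intro sum.cong) (auto simp: orthonormal_def)
    finally have C2: "(norm w)^2 = (\<Sum>v\<in>F. (cmod (c v))^2)" .
    have "(norm (S w))^2 \<le> (\<Sum>v\<in>F. (cmod (c v))^2 * b)"
      unfolding C1 using F Sless by (intro sum_mono mult_left_mono) (auto intro: less_imp_le)
    also have "\<dots> = b * (norm w)^2" by (simp add: C2 sum_distrib_left mult.commute)
    moreover have "(\<Sum>v\<in>F. if v = x then c v * complex_of_real ((norm (S x))^2) else 0)
        = complex_of_real ((norm (S x))^2) * (\<Sum>v\<in>F. if v = x then c v else 0)"
      by (simp add: sum_distrib_left) (intro sum.cong, auto)
    ultimately show ?thesis using A B by simp
  qed
  have contS: "continuous_on UNIV (\<lambda>w. S w)" by (intro continuous_intros)
  have Mid: "cinner (S x) (S w) = complex_of_real ((norm (S x))^2) * cinner x w"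
    if x: "x \<in> U" and w: "w \<in> M" for x w
  proof -
    have "closed {w. cinner (S x) (S w) = complex_of_real ((norm (S x))^2) * cinner x w}"
      by (intro closed_Collect_eq continuous_intros)
    moreover have "cspan U \<subseteq> {w. cinner (S x) (S w) = complex_of_real ((norm (S x))^2) * cinner x w}"
      using span_id[OF x] by blast
    ultimately show ?thesis using w closure_minimal unfolding M_def by blast
  qed
  have Mle: "(norm (S w))^2 \<le> b * (norm w)^2" if w: "w \<in> M" for w
  proof -
    have "closed {w. (norm (S w))^2 \<le> b * (norm w)^2}"
      by (intro closed_Collect_le continuous_intros)
    moreover have "cspan U \<subseteq> {w. (norm (S w))^2 \<le> b * (norm w)^2}"
      using span_id Une by blast
    ultimately show ?thesis using w closure_minimal unfolding M_def by blast
  qed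
  have orthM: "v = 0" if v: "v \<in> M" "\<forall>u\<in>U. cinner u v = 0" for v
  proof -
    have "closed {w. cinner v w = 0}" by (intro closed_Collect_eq continuous_intros)
    moreover have "cspan U \<subseteq> {w. cinner v w = 0}"
    proof
      fix w assume "w \<in> cspan U"
      then obtain F c where F: "finite F" "F \<subseteq> U" "w = (\<Sum>v\<in>F. c v *\<^sub>C v)" unfolding cspan_def by blast
      have "cinner v w = (\<Sum>u\<in>F. c u * cinner v u)"
        unfolding F(3) by (simp add: cinner_sum_right cinner_scaleC_right)
      also have "\<dots> = 0" using F v(2) by (intro sum.neutral) (metis cinner_conj complex_cnj_zero mult_zero_right subsetD)
      finally show "w \<in> {w. cinner v w = 0}" by simp
    qed
    ultimately have "cinner v v = 0" using v(1) closure_minimal unfolding M_def by blast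
    then show ?thesis by simp
  qed
  have strict: "(norm (S v))^2 < b" if v: "v \<in> M" "norm v = 1" for v
  proof (rule ccontr)
    assume "\<not> ?thesis"
    then have ge: "(norm (S v))^2 \<ge> b" by simp
    have "\<forall>u\<in>U. cinner u v = 0"
    proof
      fix u assume u: "u \<in> U"
      define c where "c = cinner u v"
      define z where "z = v - c *\<^sub>C u"
      have zM: "z \<in> M" unfolding z_def using v UM u Msub by (intro csubspace_diff csubspace_scaleC) auto
      have uu: "cinner u u = 1" using unit[OF u] by (simp add: cinner_self)
      have uz: "cinner u z = 0" by (simp add: z_def c_def cinner_diff_right cinner_scaleC_right uu)
      have Suz: "cinner (S u) (S z) = 0" using Mid[OF u zM] uz by simp
      have vdec: "v = c *\<^sub>C u + z" by (simp add: z_def)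
      have Sv: "S v = c *\<^sub>C S u + S z" by (simp add: vdec blinfun.add_right clinS)
      have n1: "(norm (S v))^2 = (cmod c)^2 * (norm (S u))^2 + (norm (S z))^2"
        unfolding Sv using Suz by (subst pythagoras) (auto simp: cinner_scaleC_left norm_scaleC power_mult_distrib)
      have n2: "(norm v)^2 = (cmod c)^2 + (norm z)^2"
        unfolding vdec[THEN arg_cong[of _ _ norm]] using uz unit[OF u]
        by (subst pythagoras) (auto simp: cinner_scaleC_left norm_scaleC)
      have "b * ((cmod c)^2 + (norm z)^2) \<le> (cmod c)^2 * (norm (S u))^2 + b * (norm z)^2"
        using ge n1 n2 v(2) Mle[OF zM] by simp
      then have "(cmod c)^2 * (b - (norm (S u))^2) \<le> 0" by (simp add: algebra_simps)
      moreover have "b - (norm (S u))^2 > 0" using Sless[OF u] by simp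
      ultimately have "(cmod c)^2 \<le> 0" by (simp add: mult_le_0_iff)
      then show "cinner u v = 0" by (simp add: c_def)
    qed
    then have "v = 0" using orthM v by blast
    then show False using v by simp
  qed
  have notatt: "\<not> norm_attaining_on M S"
  proof
    assume "norm_attaining_on M S"
    then obtain x where x: "x \<in> M" "norm x = 1"
      "norm (S x) = Sup {norm (S y) | y. y \<in> M \<and> norm y = 1}"
      unfolding norm_attaining_on_def by blast
    have bdd: "bdd_above {norm (S y) | y. y \<in> M \<and> norm y = 1}"
      by (intro bdd_aboveI[of _ "norm S"]) (auto intro: norm_blinfun[of S, THEN order_trans])
    have "norm (S u) \<le> norm (S x)" if u: "u \<in> U" for u
      unfolding x(3) using u UM unit by (intro cSup_upper bdd) auto
    then have "(norm (S u))^2 \<le> (norm (S x))^2" if "u \<in> U" for u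
      using that by (simp add: power_mono)
    moreover have "(norm (S x))^2 < b" by (rule strict[OF x(1,2)])
    moreover have "(norm (S x))^2 < b" by (rule strict[OF x(1,2)])
    ultimately obtain u where "u \<in> U" "(norm (S u))^2 > (norm (S x))^2"
      using Ssup[of "b - (norm (S x))^2"] by auto
    then show False using \<open>\<And>u. u \<in> U \<Longrightarrow> (norm (S u))^2 \<le> (norm (S x))^2\<close> by fastforce
  qed
  show ?thesis using Msub Mne notatt unfolding M_def by simp
qed



lemma ivt_value:
  fixes S :: "'a::complex_inner \<Rightarrow>\<^sub>L 'b::complex_inner"
  assumes V: "csubspace V" and vw: "v \<in> V" "w \<in> V" "norm v = 1" "norm w = 1"
    and Sv: "(norm (S v))^2 \<le> a" and Sw: "(norm (S w))^2 \<ge> b" and m: "a < m" "m < b"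
  shows "\<exists>u\<in>V. norm u = 1 \<and> (norm (S u))^2 = m"
proof -
  define z where "z t = (1 - t) *\<^sub>R v + t *\<^sub>R w" for t :: real
  define f where "f t = (norm (S (z t)))^2 - m * (norm (z t))^2" for t
  have cont: "continuous_on {0..1} f" unfolding f_def z_def by (intro continuous_intros)
  have f0: "f 0 \<le> 0" using Sv m vw by (simp add: f_def z_def)
  have f1: "0 \<le> f 1" using Sw m vw by (simp add: f_def z_def)
  obtain t where t: "0 \<le> t" "t \<le> 1" "f t = 0" using IVT'[of f 0 0 1, OF f0 f1 _ cont] by auto
  have zV: "z t \<in> V" unfolding z_def using V vw by (intro csubspace_add csubspace_scaleR)
  have z0: "z t \<noteq> 0"
  proof
    assume z: "z t = 0"
    then have e: "(1 - t) *\<^sub>R v = - (t *\<^sub>R w)" by (simp add: z_def eq_neg_iff_add_eq_0)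
    then have "norm ((1 - t) *\<^sub>R v) = norm (t *\<^sub>R w)" by (metis norm_minus_cancel)
    then have "1 - t = t" using t vw by simp
    then have th: "t = 1/2" by simp
    have "(1/2::real) *\<^sub>R v = (1/2::real) *\<^sub>R (- w)" using e th by simp
    then have "v = - w" by (simp only: scaleR_cancel_left) simp
    then have "norm (S v) = norm (S w)" by (simp add: blinfun.minus_right)
    then show False using Sv Sw m by simp
  qed
  define u where "u = (1 / norm (z t)) *\<^sub>R z t"
  have "(norm (S (z t)))^2 = m * (norm (z t))^2" using t(3) by (simp add: f_def)
  then have "(norm (S u))^2 = m" using z0
    by (simp add: u_def blinfun.scaleR_right power_divide)
  moreover have "norm u = 1" using z0 by (simp add: u_def)
  moreover have "u \<in> V" unfolding u_def using zV V by (intro csubspace_scaleR)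
  ultimately show ?thesis by blast
qed

primrec build :: "('h set \<Rightarrow> nat \<Rightarrow> 'h) \<Rightarrow> nat \<Rightarrow> 'h list" where
  "build g 0 = []"
| "build g (Suc n) = build g n @ [g (set (build g n)) n]"

lemma set_build: "set (build g n) = (\<lambda>m. g (set (build g m)) m) ` {..<n}"
  by (induction n) (auto simp: lessThan_Suc)

lemma AN_attains: "S \<in> AN \<Longrightarrow> csubspace M \<Longrightarrow> closed M \<Longrightarrow> M \<noteq> {0} \<Longrightarrow> norm_attaining_on M S"
  by (simp add: AN_def)

lemma not_AN_crit:
  fixes S :: "'h::chilbert_space \<Rightarrow>\<^sub>L 'h"
  assumes clin: "clinear (blinfun_apply S)" and ab: "a < b"
    and cond: "\<And>P. finite P \<Longrightarrow> \<exists>v w. (\<forall>p\<in>P. cinner p v = 0) \<and> (\<forall>p\<in>P. cinner p w = 0)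
        \<and> norm v = 1 \<and> norm w = 1 \<and> (norm (S v))^2 \<le> a \<and> (norm (S w))^2 \<ge> b"
  shows "S \<notin> AN"
proof
  assume SAN: "S \<in> AN"
  have "\<exists>r. \<forall>v. cinner (S u) (S v) = cinner r v" for u
  proof (rule riesz)
    show "cinner (S u) (S (x + y)) = cinner (S u) (S x) + cinner (S u) (S y)" for x y
      by (simp add: blinfun.add_right cinner_add_right)
    show "cinner (S u) (S (c *\<^sub>C x)) = c * cinner (S u) (S x)" for c x
      using clin by (simp add: clinear_def cinner_scaleC_right)
    show "continuous_on UNIV (\<lambda>v. cinner (S u) (S v))" by (intro continuous_intros)
  qed
  then obtain R where R: "\<And>u v. cinner (S u) (S v) = cinner (R u) v" by metis
  define \<mu> where "\<mu> n = a + (b - a) * (1 - 1 / (real n + 2))" for n :: nat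
  have \<mu>a: "a < \<mu> n" for n using ab by (simp add: \<mu>_def)
  have \<mu>b: "\<mu> n < b" for n using ab by (simp add: \<mu>_def algebra_simps)
  have step: "\<exists>u. (\<forall>p\<in>L \<union> R ` L. cinner p u = 0) \<and> norm u = 1 \<and> (norm (S u))^2 = \<mu> n"
    if L: "finite L" for L n
  proof -
    define P where "P = L \<union> R ` L"
    have P: "finite P" using L by (simp add: P_def)
    obtain v w where vw: "\<forall>p\<in>P. cinner p v = 0" "\<forall>p\<in>P. cinner p w = 0"
      "norm v = 1" "norm w = 1" "(norm (S v))^2 \<le> a" "(norm (S w))^2 \<ge> b"
      using cond[OF P] by blast
    have "\<exists>u\<in>{x. \<forall>p\<in>P. cinner p x = 0}. norm u = 1 \<and> (norm (S u))^2 = \<mu> n"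
      using vw \<mu>a[of n] \<mu>b[of n]
      by (intro ivt_value[where V="{x. \<forall>p\<in>P. cinner p x = 0}" and v=v and w=w and S=S and a=a and b=b and m="\<mu> n"] csubspace_orth) auto
    then show ?thesis unfolding P_def by blast
  qed
  define g where "g L n = (SOME u. (\<forall>p\<in>L \<union> R ` L. cinner p u = 0) \<and> norm u = 1 \<and> (norm (S u))^2 = \<mu> n)" for L n
  define u where "u n = g (set (build g n)) n" for n
  have bu: "set (build g n) = u ` {..<n}" for n unfolding u_def by (rule set_build)
  have un: "u n = g (u ` {..<n}) n" for n by (subst u_def) (simp only: bu)
  have uprop: "(\<forall>p\<in>u ` {..<n} \<union> R ` u ` {..<n}. cinner p (u n) = 0) \<and> norm (u n) = 1 \<and> (norm (S (u n)))^2 = \<mu> n" for n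
  proof -
    have "(\<forall>p\<in>u ` {..<n} \<union> R ` u ` {..<n}. cinner p (g (u ` {..<n}) n) = 0) \<and> norm (g (u ` {..<n}) n) = 1
       \<and> (norm (S (g (u ` {..<n}) n)))^2 = \<mu> n"
      unfolding g_def by (rule someI_ex, rule step) simp
    then show ?thesis by (metis un)
  qed
  have orth1: "cinner (u m) (u n) = 0" "cinner (S (u m)) (S (u n)) = 0" if "m < n" for m n
    using uprop[of n] that by (auto simp: R)
  have orth: "cinner (u m) (u n) = 0 \<and> cinner (S (u m)) (S (u n)) = 0" if "m \<noteq> n" for m n
  proof (cases "m < n")
    case True then show ?thesis using orth1 by blast
  next
    case False then have "n < m" using that by simp
    then show ?thesis using orth1[of n m] by (metis cinner_conj complex_cnj_zero)
  qed
  have unit: "norm (u n) = 1" for n using uprop by blast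
  have val: "(norm (S (u n)))^2 = \<mu> n" for n using uprop by blast
  have inj: "u m = u n \<Longrightarrow> m = n" for m n
    using orth[of m n] unit[of m] by (metis cinner_self_eq_0 norm_zero zero_neq_one)
  have res: "csubspace (closure (cspan (range u))) \<and> closed (closure (cspan (range u))) \<and>
      closure (cspan (range u)) \<noteq> {0} \<and> \<not> norm_attaining_on (closure (cspan (range u))) S"
  proof (rule not_attaining[OF clin])
    show "range u \<noteq> {}" by simp
    show "orthonormal (range u)" unfolding orthonormal_def using unit orth by (metis (mono_tags, lifting) rangeE)
    show "cinner (S x) (S y) = 0" if "x \<in> range u" "y \<in> range u" "x \<noteq> y" for x y
      using that orth by (metis rangeE)
    show "(norm (S x))^2 < b" if "x \<in> range u" for x using that val \<mu>b by auto
    show "\<exists>x\<in>range u. b - e < (norm (S x))^2" if e: "e > 0" for e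
    proof -
      obtain n :: nat where n: "(b - a) / e < n" using reals_Archimedean2 by blast
      have "(b - a) / (real n + 2) < e"
        using n e ab by (simp add: field_simps)
      then have "b - e < \<mu> n" by (simp add: \<mu>_def algebra_simps)
      then show ?thesis using val by auto
    qed
  qed
  then show False using AN_attains[OF SAN] by blast
qed



lemma attain_from_max:
  fixes S :: "'a::real_normed_vector \<Rightarrow>\<^sub>L 'b::real_normed_vector"
  assumes "x \<in> M" "norm x = 1" "\<And>y. y \<in> M \<Longrightarrow> norm y = 1 \<Longrightarrow> norm (S y) \<le> norm (S x)"
  shows "norm_attaining_on M S"
proof -
  have "Sup {norm (S y) | y. y \<in> M \<and> norm y = 1} = norm (S x)"
    using assms by (intro cSup_eq_maximum) auto
  then show ?thesis unfolding norm_attaining_on_def using assms(1,2) by auto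
qed

lemma attain_fr:
  fixes S :: "'h::chilbert_space \<Rightarrow>\<^sub>L 'h"
  assumes E: "finite E" "orthonormal E"
    and id: "\<And>v. (norm (S v))^2 - (norm v)^2 = (norm (S (proj E v)))^2 - (norm (proj E v))^2"
    and M: "csubspace M" "closed M" "M \<noteq> {0}"
  shows "norm_attaining_on M S"
proof -
  define f where "f v = (norm (S (proj E v)))^2 - (norm (proj E v))^2" for v
  have fcont: "continuous_on A f" for A
    unfolding f_def using bounded_linear_proj[OF E] by (intro continuous_intros) (auto simp: linear_continuous_on)
  have Sv: "(norm (S v))^2 = (norm v)^2 + f v" for v using id[of v] by (simp add: f_def)
  define K where "K = M \<inter> {v. \<forall>e\<in>E. cinner e v = 0}"
  have K: "csubspace K" "closed K" unfolding K_def using M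
    by (auto intro: csubspace_Int csubspace_orth closed_orth)
  define N where "N = M \<inter> {n. \<forall>k\<in>K. cinner k n = 0}"
  have N: "csubspace N" "closed N" unfolding N_def using M
    by (auto intro: csubspace_Int csubspace_orth closed_orth)
  have NE: "\<forall>n\<in>N. (\<forall>e\<in>E. cinner e n = 0) \<longrightarrow> n = 0"
  proof (intro ballI impI)
    fix n assume n: "n \<in> N" "\<forall>e\<in>E. cinner e n = 0"
    then have "n \<in> K" by (simp add: N_def K_def)
    then have "cinner n n = 0" using n(1) by (simp add: N_def)
    then show "n = 0" by simp
  qed
  have Nc: "compact (N \<inter> cball 0 1)" by (rule compact_fd_ball[OF E(1) N NE])
  have NM: "N \<subseteq> M" "K \<subseteq> M" unfolding N_def K_def by auto
  have dec: "\<exists>k n. k \<in> K \<and> n \<in> N \<and> v = k + n \<and> (norm v)^2 = (norm k)^2 + (norm n)^2 \<and> f v = f n"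
    if v: "v \<in> M" for v
  proof -
    obtain k where k: "k \<in> K" "\<forall>k'\<in>K. cinner k' (v - k) = 0" using projection_theorem[OF K] by blast
    have nN: "v - k \<in> N" unfolding N_def using k v NM M(1) by (auto intro: csubspace_diff)
    have "proj E k = 0" using k(1) by (intro proj_orth) (auto simp: K_def)
    then have "proj E v = proj E (v - k)" by (simp add: proj_diff)
    then have "f v = f (v - k)" by (simp add: f_def)
    moreover have "(norm v)^2 = (norm k)^2 + (norm (v - k))^2"
      using pythagoras[of k "v - k"] k by simp
    ultimately show ?thesis using k(1) nN by (intro exI[of _ k] exI[of _ "v - k"]) auto
  qed
  show ?thesis
  proof (cases "K = {0}")
    case True
    define Sph where "Sph = N \<inter> {x. norm x = 1}"
    have MN: "v \<in> N" if "v \<in> M" for v using dec[OF that] True by auto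
    have "compact Sph"
    proof -
      have "Sph = (N \<inter> cball 0 1) \<inter> {x. norm x = 1}" by (auto simp: Sph_def)
      also have "compact \<dots>" by (rule compact_Int_closed[OF Nc]) (intro closed_Collect_eq continuous_intros)
      finally show ?thesis .
    qed
    moreover obtain m where m: "m \<in> M" "m \<noteq> 0" using M(3) csubspace_0[OF M(1)] by blast
    then have "(1 / norm m) *\<^sub>R m \<in> Sph" using MN M(1) by (auto simp: Sph_def intro: csubspace_scaleR)
    then have "Sph \<noteq> {}" by blast
    ultimately obtain x where x: "x \<in> Sph" "\<forall>y\<in>Sph. norm (S y) \<le> norm (S x)"
    proof -
      have "continuous_on Sph (\<lambda>x. norm (S x))" by (intro continuous_intros)
      then show ?thesis using continuous_attains_sup[of Sph "\<lambda>x. norm (S x)"] \<open>compact Sph\<close> \<open>Sph \<noteq> {}\<close> that by blast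
    qed
    show ?thesis
      using x MN NM by (intro attain_from_max[of x]) (auto simp: Sph_def)
  next
    case False
    then obtain k1 where k1: "k1 \<in> K" "k1 \<noteq> 0" using csubspace_0[OF K(1)] by blast
    define k0 where "k0 = (1 / norm k1) *\<^sub>R k1"
    have k0: "k0 \<in> K" "norm k0 = 1" using k1 K(1) by (auto simp: k0_def intro: csubspace_scaleR)
    have "N \<inter> cball 0 1 \<noteq> {}" using csubspace_0[OF N(1)] by auto
    then obtain n where n: "n \<in> N \<inter> cball 0 1" "\<forall>y\<in>N \<inter> cball 0 1. f y \<le> f n"
      using continuous_attains_sup[OF Nc _ fcont] by blast
    define x where "x = n + sqrt (1 - (norm n)^2) *\<^sub>R k0"
    have nle: "norm n \<le> 1" using n by auto
    have "n \<in> M" "k0 \<in> M" using n k0 NM by auto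
    then have xM: "x \<in> M" unfolding x_def using M(1) by (intro csubspace_add csubspace_scaleR)
    have kn: "cinner k0 n = 0" using n k0 by (auto simp: N_def)
    have "(norm x)^2 = (norm n)^2 + (norm (sqrt (1 - (norm n)^2) *\<^sub>R k0))^2"
      unfolding x_def using kn by (intro pythagoras) (simp add: cinner_scaleR_right cinner_conj[of n])
    also have "\<dots> = 1" using nle k0 by (simp add: abs_le_square_iff power_le_one)
    finally have "(norm x)^2 = 1^2" by simp
    then have nx: "norm x = 1" using power2_eq_iff_nonneg[of "norm x" 1] by simp
    have "proj E k0 = 0" using k0(1) by (intro proj_orth) (auto simp: K_def)
    then have fx: "f x = f n" by (simp add: f_def x_def proj_add proj_scaleR)
    show ?thesis
    proof (rule attain_from_max[OF xM nx])
      fix y assume y: "y \<in> M" "norm y = 1"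
      obtain k m where km: "k \<in> K" "m \<in> N" "y = k + m" "(norm y)^2 = (norm k)^2 + (norm m)^2" "f y = f m"
        using dec[OF y(1)] by blast
      have "norm m \<le> 1" using km(4) y(2) by (metis abs_norm_cancel le_add_same_cancel2 one_power2 power2_le_iff_abs_le zero_le_power2 zero_le_one)
      then have "f m \<le> f n" using n km by auto
      then have "(norm (S y))^2 \<le> (norm (S x))^2" using Sv[of y] Sv[of x] y(2) nx km(5) fx by simp
      then show "norm (S y) \<le> norm (S x)" by (simp add: power2_le_iff_abs_le)
    qed
  qed
qed



lemma bounded_linear_block:
  fixes C :: "'b::real_normed_vector \<Rightarrow>\<^sub>L 'a::real_normed_vector" and D :: "'a \<Rightarrow>\<^sub>L 'b"
  shows "bounded_linear (\<lambda>(x, y). (x + C y, D x + y))"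
proof -
  have "(\<lambda>(x, y). (x + C y, D x + y)) = (\<lambda>p. (fst p + C (snd p), D (fst p) + snd p))"
    by (auto simp: fun_eq_iff)
  moreover have "bounded_linear (\<lambda>p::'a \<times> 'b. (fst p + C (snd p), D (fst p) + snd p))"
    by (intro bounded_linear_Pair bounded_linear_add bounded_linear_fst bounded_linear_snd
        bounded_linear_compose[OF blinfun.bounded_linear_right])
  ultimately show ?thesis by simp
qed

lemma block_apply: "blinfun_apply (block_op C D) (x, y) = (x + C y, D x + y)"
  unfolding block_op_def by (simp add: bounded_linear_Blinfun_apply[OF bounded_linear_block])

lemma cinner_ext: "(\<And>x. cinner x u = cinner x u') \<Longrightarrow> u = (u'::'a::complex_inner)"
proof -
  assume "\<And>x. cinner x u = cinner x u'"
  then have "cinner (u - u') (u - u') = 0" by (simp add: cinner_diff_right)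
  then show ?thesis by simp
qed

lemma adj_clinear:
  fixes C :: "'b::complex_inner \<Rightarrow>\<^sub>L 'a::complex_inner" and D :: "'a \<Rightarrow>\<^sub>L 'b"
  assumes adj: "\<And>x y. cinner (C x) y = cinner x (D y)" and clin: "clinear (blinfun_apply C)"
  shows "clinear (blinfun_apply D)"
  unfolding clinear_def
proof (intro conjI allI)
  show "D (x + y) = D x + D y" for x y by (simp add: blinfun.add_right)
  show "D (c *\<^sub>C x) = c *\<^sub>C D x" for c x
    by (rule cinner_ext) (simp add: adj[symmetric] cinner_scaleC_right)
qed

lemma adj_norm:
  fixes D :: "'b::complex_inner \<Rightarrow> 'a::complex_inner" and D' :: "'a \<Rightarrow> 'b"
  assumes adj: "\<And>x y. cinner (D x) y = cinner x (D' y)" and bnd: "\<And>y. norm (D y) \<le> e * norm y"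
    and e: "e \<ge> 0"
  shows "norm (D' x) \<le> e * norm x"
proof (cases "D' x = 0")
  case True then show ?thesis using e by simp
next
  case False
  have "(norm (D' x))^2 = Re (cinner (D (D' x)) x)" by (simp add: adj Re_cinner_self)
  also have "\<dots> \<le> cmod (cinner (D (D' x)) x)" by (rule complex_Re_le_cmod)
  also have "\<dots> \<le> norm (D (D' x)) * norm x" by (rule cauchy_schwarz)
  also have "\<dots> \<le> e * norm (D' x) * norm x" using bnd by (simp add: mult_right_mono)
  finally have "norm (D' x) * norm (D' x) \<le> norm (D' x) * (e * norm x)"
    by (simp add: power2_eq_square mult_ac)
  then show ?thesis using False by simp
qed

lemma adj_flip: "(\<And>x y. cinner (C x) y = cinner x (D y)) \<Longrightarrow> cinner a (C y) = cinner (D a) (y::'b::complex_inner)"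
  by (metis cinner_conj)

section \<open>A compactness criterion\<close>

lemma compact_crit:
  fixes C :: "'b::chilbert_space \<Rightarrow>\<^sub>L 'a::chilbert_space"
  assumes crit: "\<And>c. c > 0 \<Longrightarrow> \<exists>Q. finite Q \<and> (\<forall>y. (\<forall>q\<in>Q. cinner q y = 0) \<longrightarrow> norm (C y) \<le> c * norm y)"
  shows "compact_op C"
proof -
  have tb: "\<exists>k. finite k \<and> C ` cball 0 1 \<subseteq> (\<Union>x\<in>k. ball x e)" if e: "e > 0" for e
  proof -
    obtain Q where Q: "finite Q" "\<And>y. (\<forall>q\<in>Q. cinner q y = 0) \<Longrightarrow> norm (C y) \<le> e/2 * norm y"
      using crit[of "e/2"] e by auto
    obtain E where E: "finite E" "orthonormal E" "\<forall>q\<in>Q. proj E q = q" using gram_schmidt[OF Q(1)] by blast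
    have "compact (C ` coefset E)"
      by (intro compact_continuous_image compact_coefset E continuous_intros)
    then obtain k where k: "finite k" "C ` coefset E \<subseteq> (\<Union>x\<in>k. ball x (e/2))"
      using e unfolding compact_eq_totally_bounded by (meson half_gt_zero)
    have "C ` cball 0 1 \<subseteq> (\<Union>x\<in>k. ball x e)"
    proof
      fix z assume "z \<in> C ` cball 0 1"
      then obtain y where y: "norm y \<le> 1" "z = C y" by auto
      have p: "proj E y \<in> coefset E" using proj_in_coefset[OF E(2) y(1)] .
      then have "C (proj E y) \<in> (\<Union>x\<in>k. ball x (e/2))" using k(2) by blast
      then obtain x where x: "x \<in> k" "dist x (C (proj E y)) < e/2" by auto
      have orth: "\<forall>q\<in>Q. cinner q (y - proj E y) = 0"
        using E cinner_proj_diff_proj[OF E(1,2)] by metis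
      have "norm (C (y - proj E y)) \<le> e/2 * norm (y - proj E y)" using Q(2)[OF orth] .
      also have "\<dots> \<le> e/2" using norm_diff_proj_le[OF E(1,2), of y] y(1) e by simp
      finally have "dist (C (proj E y)) z \<le> e/2"
        by (simp add: y(2) dist_norm blinfun.diff_right norm_minus_commute)
      then have "dist x z < e" using x(2) dist_triangle[of x z "C (proj E y)"] by linarith
      then show "z \<in> (\<Union>x\<in>k. ball x e)" using x(1) by auto
    qed
    then show ?thesis using k(1) by blast
  qed
  have "compact (closure (C ` cball 0 1))"
    unfolding compact_eq_totally_bounded
  proof (intro conjI allI impI)
    show "complete (closure (C ` cball 0 1))" by (simp add: complete_eq_closed)
    fix e :: real assume e: "e > 0"
    obtain k where k: "finite k" "C ` cball 0 1 \<subseteq> (\<Union>x\<in>k. ball x (e/2))" using tb[of "e/2"] e by auto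
    have "closure (C ` cball 0 1) \<subseteq> (\<Union>x\<in>k. cball x (e/2))"
    proof (rule closure_minimal)
      show "C ` cball 0 1 \<subseteq> (\<Union>x\<in>k. cball x (e/2))" using k(2) ball_subset_cball by blast
      show "closed (\<Union>x\<in>k. cball x (e/2))" using k(1) by (intro closed_UN) auto
    qed
    also have "\<dots> \<subseteq> (\<Union>x\<in>k. ball x e)" using e by auto
    finally show "\<exists>k. finite k \<and> closure (C ` cball 0 1) \<subseteq> (\<Union>x\<in>k. ball x e)" using k(1) by blast
  qed
  then show ?thesis by (simp add: compact_op_def)
qed



lemma arith0:
  fixes c g :: real
  assumes "0 < c" "c < g" "g \<le> 1"
  shows "g^2 \<le> 1" "c^2 < g^2"
proof -
  have "0 \<le> g" using assms by simp
  then show "g^2 \<le> 1" using assms(3) by (simp add: power_le_one)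
  show "c^2 < g^2" using assms(1,2) by (intro power_strict_mono) auto
qed

lemma arith1:
  fixes c g X :: real
  assumes "0 < c" "c < g" "g \<le> 1" "X \<le> 1 - g^2"
  shows "X / (1 + g^2) \<le> 1 - c^2"
proof -
  note g2 = arith0[OF assms(1-3)]
  have pos: "1 + g^2 > 0" by (simp add: add_pos_nonneg)
  have "X / (1 + g^2) \<le> (1 - g^2) / (1 + g^2)" using assms(4) pos by (intro divide_right_mono) auto
  also have "\<dots> \<le> 1 - g^2"
  proof -
    have "(1 - g^2) * 1 \<le> (1 - g^2) * (1 + g^2)" using g2 by (intro mult_left_mono) auto
    then show ?thesis using pos by (simp add: divide_le_eq)
  qed
  finally show ?thesis using g2 by linarith
qed

lemma arith2:
  fixes c g X :: real
  assumes "0 < c" "c < g" "g \<le> 1" "X \<ge> 1 + 6 * g^2"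
  shows "X / (1 + g^2) \<ge> 1 + 2 * c^2"
proof -
  note g2 = arith0[OF assms(1-3)]
  have pos: "1 + g^2 > 0" by (simp add: add_pos_nonneg)
  have "g^2 * g^2 \<le> g^2" using g2 mult_left_le[of "g^2" "g^2"] by simp
  moreover have "c^2 * g^2 \<le> g^2 * g^2" using g2 by (intro mult_right_mono) auto
  ultimately have "2 * c^2 + 2 * (c^2 * g^2) \<le> 5 * g^2" using g2 zero_le_power2[of g] by linarith
  then have "(1 + 2 * c^2) * (1 + g^2) \<le> 1 + 6 * g^2"
    by (simp add: algebra_simps)
  then show ?thesis using assms(4) pos by (simp add: le_divide_eq)
qed



lemma norm_Pair_sq: "(norm (a, b))^2 = (norm a)^2 + (norm b)^2"
  by (simp add: norm_Pair)

lemma test_vectors: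
  fixes C :: "'b::chilbert_space \<Rightarrow>\<^sub>L 'a::chilbert_space" and Cadj :: "'a \<Rightarrow>\<^sub>L 'b"
  assumes adj: "\<And>x y. cinner (C x) y = cinner x (Cadj y)"
    and Dn: "\<And>z. norm (Cadj z) \<le> norm z"
    and y: "norm y = 1"
  shows "(norm (block_op C Cadj (- C y, y)))^2 \<le> 1 - (norm (C y))^2"
    and "(norm (block_op C Cadj (C y, y)))^2 \<ge> 1 + 6 * (norm (C y))^2"
    and "(norm (- C y, y))^2 = 1 + (norm (C y))^2"
    and "(norm (C y, y))^2 = 1 + (norm (C y))^2"
proof -
  define g where "g = norm (C y)"
  have ip: "cinner y (Cadj (C y)) = complex_of_real (g^2)"
    using adj[of y "C y"] by (simp add: cinner_self g_def)
  have ip2: "Re (cinner (Cadj (C y)) y) = g^2"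
    using ip by (metis Re_complex_of_real cinner_conj cnj.simps(1))
  have dn: "norm (Cadj (C y)) \<le> g" using Dn[of "C y"] by (simp add: g_def)
  have dn2: "(norm (Cadj (C y)))^2 \<le> g^2" using dn by (simp add: power_mono)
  have "block_op C Cadj (- C y, y) = (0, y - Cadj (C y))"
    by (simp add: block_apply blinfun.minus_right)
  then have "(norm (block_op C Cadj (- C y, y)))^2 = (norm (y - Cadj (C y)))^2" by simp
  also have "\<dots> = 1 + (norm (Cadj (C y)))^2 - 2 * g^2"
    by (simp add: norm_diff_sq y ip)
  finally show "(norm (block_op C Cadj (- C y, y)))^2 \<le> 1 - (norm (C y))^2"
    using dn2 by (simp add: g_def)
  have "block_op C Cadj (C y, y) = (C y + C y, Cadj (C y) + y)"
    by (simp add: block_apply)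
  then have "(norm (block_op C Cadj (C y, y)))^2 = (norm (C y + C y))^2 + (norm (Cadj (C y) + y))^2"
    by (simp add: norm_Pair_sq)
  also have "(norm (C y + C y))^2 = 4 * g^2"
    by (simp add: g_def scaleR_2[symmetric] power_mult_distrib)
  also have "(norm (Cadj (C y) + y))^2 = (norm (Cadj (C y)))^2 + 1 + 2 * g^2"
    by (simp add: norm_add_sq y ip2)
  finally show "(norm (block_op C Cadj (C y, y)))^2 \<ge> 1 + 6 * (norm (C y))^2"
    by (simp add: g_def)
  show "(norm (- C y, y))^2 = 1 + (norm (C y))^2" "(norm (C y, y))^2 = 1 + (norm (C y))^2"
    by (simp_all add: norm_Pair_sq y)
qed

lemma closure_imp_compact:
  fixes C :: "'b::chilbert_space \<Rightarrow>\<^sub>L 'a::chilbert_space" and Cadj :: "'a \<Rightarrow>\<^sub>L 'b"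
  assumes nC: "norm C \<le> 1" and adj: "\<forall>x y. cinner (C x) y = cinner x (Cadj y)"
    and T: "block_op C Cadj \<in> closure (AN :: (('a \<times> 'b) \<Rightarrow>\<^sub>L ('a \<times> 'b)) set)"
  shows "compact_op C"
proof (rule ccontr)
  assume nc: "\<not> compact_op C"
  have adj': "\<And>x y. cinner (C x) y = cinner x (Cadj y)" using adj by blast
  have Cn: "norm (C z) \<le> norm z" for z
    using norm_blinfun[of C z] nC by (metis mult_le_cancel_right1 norm_ge_zero order_trans mult_right_mono mult_1)
  have Dn: "norm (Cadj z) \<le> norm z" for z
    using adj_norm[of C Cadj 1 z] adj' Cn by simp
  have "\<exists>c>0. \<forall>Q. finite Q \<longrightarrow> (\<exists>y. (\<forall>q\<in>Q. cinner q y = 0) \<and> norm (C y) > c * norm y)"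
  proof (rule ccontr)
    assume "\<not> ?thesis"
    then have "\<And>c. c > 0 \<Longrightarrow> \<exists>Q. finite Q \<and> (\<forall>y. (\<forall>q\<in>Q. cinner q y = 0) \<longrightarrow> norm (C y) \<le> c * norm y)"
      by (meson not_le)
    then have "compact_op C" by (rule compact_crit)
    then show False using nc by simp
  qed
  then obtain c where c: "c > 0" "\<And>Q. finite Q \<Longrightarrow> \<exists>y. (\<forall>q\<in>Q. cinner q y = 0) \<and> norm (C y) > c * norm y"
    by blast
  have unitY: "\<exists>y. (\<forall>q\<in>Q. cinner q y = 0) \<and> norm y = 1 \<and> norm (C y) > c" if Q: "finite Q" for Q
  proof -
    obtain y where y: "\<forall>q\<in>Q. cinner q y = 0" "norm (C y) > c * norm y" using c(2)[OF Q] by blast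
    then have y0: "y \<noteq> 0" using c(1) by auto
    define y' where "y' = (1 / norm y) *\<^sub>R y"
    have "\<forall>q\<in>Q. cinner q y' = 0" using y(1) by (simp add: y'_def cinner_scaleR_right)
    moreover have "norm y' = 1" using y0 by (simp add: y'_def)
    moreover have "norm (C y') > c" using y(2) y0
      by (simp add: y'_def blinfun.scaleR_right pos_less_divide_eq mult.commute)
    ultimately show ?thesis by blast
  qed
  obtain y0 where "norm y0 = 1" "norm (C y0) > c" using unitY[of "{}"] by auto
  then have c1: "c < 1" using Cn[of y0] by simp
  define \<delta> where "\<delta> = c^2 / 4"
  have \<delta>: "\<delta> > 0" using c(1) by (simp add: \<delta>_def)
  obtain S where S: "S \<in> AN" "dist S (block_op C Cadj) < \<delta>"
    using T \<delta> unfolding closure_approachable by blast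
  have ST: "norm (S z - block_op C Cadj z) \<le> \<delta> * norm z" for z
  proof -
    have "norm (S z - block_op C Cadj z) = norm ((S - block_op C Cadj) z)" by (simp add: blinfun.diff_left)
    also have "\<dots> \<le> norm (S - block_op C Cadj) * norm z" by (rule norm_blinfun)
    also have "\<dots> \<le> \<delta> * norm z" using S(2) by (intro mult_right_mono) (auto simp: dist_norm)
    finally show ?thesis .
  qed
  have Sclin: "clinear (blinfun_apply S)" using S(1) by (simp add: AN_def BOps_def)
  have "S \<notin> AN"
  proof (rule not_AN_crit[OF Sclin, of "(1 - c^2/4)^2" "(1 + c^2/4)^2"])
    show "(1 - c^2/4)^2 < (1 + c^2/4)^2"
    proof -
      have "c^2 < 4" using c c1 by (smt (verit) power_le_one zero_le_power2)
      then have "0 \<le> 1 - c^2/4" by simp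
      moreover have "1 - c^2/4 < 1 + c^2/4" using c(1) by simp
      ultimately show ?thesis by (intro power_strict_mono) auto
    qed
  next
    fix P :: "('a \<times> 'b) set" assume P: "finite P"
    define Q where "Q = (\<lambda>p. Cadj (fst p)) ` P \<union> snd ` P"
    have "finite Q" using P by (simp add: Q_def)
    then obtain y where y: "\<forall>q\<in>Q. cinner q y = 0" "norm y = 1" "norm (C y) > c" using unitY by blast
    define g where "g = norm (C y)"
    have g: "0 < c" "c < g" "g \<le> 1" using c(1) y Cn[of y] by (auto simp: g_def)
    note tv = test_vectors[OF adj' Dn y(2)]
    define n0 where "n0 = sqrt (1 + g^2)"
    have n0: "n0 > 0" "n0^2 = 1 + g^2" by (simp_all add: n0_def add_pos_nonneg)
    define v where "v = (1 / n0) *\<^sub>R (- C y, y)"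
    define w where "w = (1 / n0) *\<^sub>R (C y, y)"
    have nv: "norm v = 1"
    proof -
      have "norm (- C y, y) = n0" using tv(3) by (simp add: n0_def g_def real_sqrt_unique)
      moreover have "norm v = \<bar>1 / n0\<bar> * norm (- C y, y)" unfolding v_def by (rule norm_scaleR)
      ultimately show ?thesis using n0 by simp
    qed
    have nw: "norm w = 1"
    proof -
      have "norm (C y, y) = n0" using tv(4) by (simp add: n0_def g_def real_sqrt_unique)
      moreover have "norm w = \<bar>1 / n0\<bar> * norm (C y, y)" unfolding w_def by (rule norm_scaleR)
      ultimately show ?thesis using n0 by simp
    qed
    have orthP: "cinner p v = 0 \<and> cinner p w = 0" if p: "p \<in> P" for p
    proof -
      obtain p1 p2 where pp: "p = (p1, p2)" by (cases p)
      have "Cadj p1 \<in> Q" "p2 \<in> Q" using p pp unfolding Q_def by (force, force)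
      then have "cinner (Cadj p1) y = 0" "cinner p2 y = 0" using y(1) by auto
      then have "cinner p1 (C y) = 0" by (simp add: adj_flip[OF adj'])
      then show ?thesis using \<open>cinner p2 y = 0\<close>
        by (simp add: pp v_def w_def cinner_scaleR_right cinner_Pair cinner_minus_right)
    qed
    have Tv: "norm (block_op C Cadj v) \<le> 1 - c^2/2"
    proof -
      have e1: "block_op C Cadj v = (1/n0) *\<^sub>R block_op C Cadj (- C y, y)"
        unfolding v_def by (rule blinfun.scaleR_right)
      have "(norm (block_op C Cadj v))^2 = (norm (block_op C Cadj (- C y, y)))^2 / n0^2"
        unfolding e1 norm_scaleR using n0 by (simp add: power_mult_distrib power_divide)
      then have "(norm (block_op C Cadj v))^2 = (norm (block_op C Cadj (- C y, y)))^2 / (1 + g^2)"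
        using n0 by simp
      also have "\<dots> \<le> 1 - c^2" using arith1[OF g tv(1)[folded g_def]] .
      also have "\<dots> \<le> (1 - c^2/2)^2"
        using zero_le_power2[of "c^2"] by (simp add: power2_eq_square algebra_simps)
      finally have sq: "(norm (block_op C Cadj v))^2 \<le> (1 - c^2/2)^2" .
      have "c^2 \<le> 1" using c(1) c1 by (simp add: power_le_one)
      then have "0 \<le> 1 - c^2/2" by simp
      with sq show ?thesis by (rule power2_le_imp_le)
    qed
    have Tw: "norm (block_op C Cadj w) \<ge> 1 + c^2/2"
    proof -
      have "(1 + c^2/2)^2 \<le> 1 + 2 * c^2"
      proof -
        have "c^2 \<le> 1" using g c1 by (simp add: power_le_one)
        then have "c^2 * c^2 \<le> 4 * c^2" by (intro mult_right_mono) auto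
        then show ?thesis by (simp add: power2_eq_square algebra_simps)
      qed
      also have "1 + 2 * c^2 \<le> (norm (block_op C Cadj (C y, y)))^2 / (1 + g^2)"
        using arith2[OF g tv(2)[folded g_def]] .
      also have "\<dots> = (norm (block_op C Cadj w))^2"
      proof -
        have e1: "block_op C Cadj w = (1/n0) *\<^sub>R block_op C Cadj (C y, y)"
          unfolding w_def by (rule blinfun.scaleR_right)
        have "(norm (block_op C Cadj w))^2 = (norm (block_op C Cadj (C y, y)))^2 / n0^2"
          unfolding e1 norm_scaleR using n0 by (simp add: power_mult_distrib power_divide)
        then show ?thesis using n0 by simp
      qed
      finally have sq: "(1 + c^2/2)^2 \<le> (norm (block_op C Cadj w))^2" .
      then show ?thesis by (rule power2_le_imp_le) simp
    qed
    have Sv: "norm (S v) \<le> 1 - c^2/4"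
    proof -
      have "norm (S v) - norm (block_op C Cadj v) \<le> norm (S v - block_op C Cadj v)"
        by (rule norm_triangle_ineq2)
      moreover have "norm (S v - block_op C Cadj v) \<le> \<delta>" using ST[of v] nv by simp
      ultimately show ?thesis using Tv by (simp add: \<delta>_def)
    qed
    have Sw: "norm (S w) \<ge> 1 + c^2/4"
    proof -
      have "norm (block_op C Cadj w) - norm (S w) \<le> norm (block_op C Cadj w - S w)"
        by (rule norm_triangle_ineq2)
      moreover have "norm (block_op C Cadj w - S w) \<le> \<delta>" using ST[of w] nw by (simp add: norm_minus_commute)
      ultimately show ?thesis using Tw by (simp add: \<delta>_def)
    qed
    have Sv2: "(norm (S v))^2 \<le> (1 - c^2/4)^2" using Sv by (intro power_mono) auto
    have Sw2: "(norm (S w))^2 \<ge> (1 + c^2/4)^2"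
      using Sw by (intro power_mono) (auto simp: add_nonneg_nonneg)
    show "\<exists>v w. (\<forall>p\<in>P. cinner p v = 0) \<and> (\<forall>p\<in>P. cinner p w = 0) \<and> norm v = 1 \<and> norm w = 1
        \<and> (norm (S v))^2 \<le> (1 - c^2/4)^2 \<and> (norm (S w))^2 \<ge> (1 + c^2/4)^2"
      using orthP nv nw Sv2 Sw2 by blast
  qed
  then show False using S(1) by simp
qed



lemma proj_sum: "proj E (\<Sum>i\<in>A. f i) = (\<Sum>i\<in>A. proj E (f i))"
  by (induction A rule: infinite_finite_induct) (auto simp: proj_add)

lemma approx_finite_rank:
  fixes C :: "'b::chilbert_space \<Rightarrow>\<^sub>L 'a::chilbert_space"
  assumes comp: "compact_op C" and eps: "\<epsilon> > 0"
  shows "\<exists>E. finite E \<and> orthonormal E \<and> (\<forall>y. norm (C y - proj E (C y)) \<le> \<epsilon> * norm y)"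
proof -
  have "compact (closure (C ` cball 0 1))" using comp by (simp add: compact_op_def)
  then obtain k where k: "finite k" "closure (C ` cball 0 1) \<subseteq> (\<Union>x\<in>k. ball x \<epsilon>)"
    using eps unfolding compact_eq_totally_bounded by blast
  obtain E where E: "finite E" "orthonormal E" "\<forall>x\<in>k. proj E x = x" using gram_schmidt[OF k(1)] by blast
  have unitb: "norm (C y - proj E (C y)) \<le> \<epsilon>" if y: "norm y \<le> 1" for y
  proof -
    define z where "z = C y"
    have "z \<in> C ` cball 0 1" using y by (auto simp: z_def)
    then have "z \<in> closure (C ` cball 0 1)" by (rule closure_subset[THEN subsetD])
    then have "z \<in> (\<Union>x\<in>k. ball x \<epsilon>)" using k(2) by (rule subsetD[rotated])
    then obtain x where x: "x \<in> k" "dist x z < \<epsilon>" by auto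
    have px: "proj E x = x" using E(3) x(1) by simp
    have "cinner (proj E (z - x)) (z - proj E z) = 0" by (rule cinner_proj_diff_proj[OF E(1,2)])
    then have o: "cinner (z - proj E z) (proj E (z - x)) = 0" by (metis cinner_conj complex_cnj_zero)
    have zx: "z - x = (z - proj E z) + proj E (z - x)" by (simp add: proj_diff px)
    have "(norm (z - x))^2 = (norm (z - proj E z))^2 + (norm (proj E (z - x)))^2"
      unfolding zx[THEN arg_cong[of _ _ norm]] by (rule pythagoras[OF o])
    then have "(norm (z - proj E z))^2 \<le> (norm (z - x))^2" by simp
    then have "norm (z - proj E z) \<le> norm (z - x)" by (rule power2_le_imp_le) simp
    also have "\<dots> < \<epsilon>" using x(2) by (simp add: dist_norm norm_minus_commute)
    finally show ?thesis by (simp add: z_def)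
  qed
  have "norm (C y - proj E (C y)) \<le> \<epsilon> * norm y" for y
  proof (cases "y = 0")
    case True then show ?thesis by simp
  next
    case False
    define y' where "y' = (1 / norm y) *\<^sub>R y"
    have "norm y' \<le> 1" using False by (simp add: y'_def)
    then have b: "norm (C y' - proj E (C y')) \<le> \<epsilon>" by (rule unitb)
    have "C y - proj E (C y) = norm y *\<^sub>R (C y' - proj E (C y'))"
      using False by (simp add: y'_def blinfun.scaleR_right proj_scaleR scaleR_diff_right)
    then have "norm (C y - proj E (C y)) = norm y * norm (C y' - proj E (C y'))" by simp
    also have "\<dots> \<le> norm y * \<epsilon>" using b by (simp add: mult_left_mono)
    finally show ?thesis by (simp add: mult.commute)
  qed
  then show ?thesis using E(1,2) by blast
qed



lemma cinner_0_Pair: "cinner (0, a) p = cinner a (snd p)"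
  by (cases p) (simp add: cinner_Pair)

lemma cinner_Pair_0: "cinner (a, 0) p = cinner a (fst p)"
  by (cases p) (simp add: cinner_Pair)

lemma compact_imp_closure:
  fixes C :: "'b::chilbert_space \<Rightarrow>\<^sub>L 'a::chilbert_space" and Cadj :: "'a \<Rightarrow>\<^sub>L 'b"
  assumes clin: "clinear (blinfun_apply C)" and adj: "\<And>x y. cinner (C x) y = cinner x (Cadj y)"
    and comp: "compact_op C"
  shows "block_op C Cadj \<in> closure (AN :: (('a \<times> 'b) \<Rightarrow>\<^sub>L ('a \<times> 'b)) set)"
  unfolding closure_approachable
proof (intro allI impI)
  fix e :: real assume e: "e > 0"
  obtain E where E: "finite E" "orthonormal E" "\<And>y. norm (C y - proj E (C y)) \<le> (e/2) * norm y"
    using approx_finite_rank[OF comp, of "e/2"] e by auto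
  define Pb where "Pb = Blinfun (proj E)"
  have Pb: "blinfun_apply Pb = proj E"
    using bounded_linear_proj[OF E(1,2)] by (simp add: Pb_def bounded_linear_Blinfun_apply)
  define S :: "('a \<times> 'b) \<Rightarrow>\<^sub>L ('a \<times> 'b)" where "S = block_op (Pb o\<^sub>L C) (Cadj o\<^sub>L Pb)"
  have Sapp: "S (x, y) = (x + proj E (C y), Cadj (proj E x) + y)" for x y
    by (simp add: S_def block_apply Pb)
  have Dclin: "clinear (blinfun_apply Cadj)" by (rule adj_clinear[OF adj clin])
  have Cs: "C (c *\<^sub>C y) = c *\<^sub>C C y" for c y using clin by (simp add: clinear_def)
  have Ds: "Cadj (c *\<^sub>C y) = c *\<^sub>C Cadj y" for c y using Dclin by (simp add: clinear_def)
  have bound: "norm ((S - block_op C Cadj) z) \<le> (e/2) * norm z" for z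
  proof -
    obtain x y where z: "z = (x, y)" by (cases z)
    define D where "D y = C y - proj E (C y)" for y
    define D' where "D' x = Cadj x - Cadj (proj E x)" for x
    have adjD: "cinner (D y) x = cinner y (D' x)" for x y
      by (simp add: D_def D'_def cinner_diff_left cinner_diff_right adj proj_selfadj)
    have bD: "norm (D y) \<le> (e/2) * norm y" for y using E(3) by (simp add: D_def)
    have bD': "norm (D' x) \<le> (e/2) * norm x" for x using adj_norm[OF adjD bD] e by simp
    have "(S - block_op C Cadj) z = (- D y, - D' x)"
      by (simp add: z blinfun.diff_left Sapp block_apply D_def D'_def)
    then have "(norm ((S - block_op C Cadj) z))^2 = (norm (D y))^2 + (norm (D' x))^2"
      by (simp add: norm_Pair_sq)
    also have "\<dots> \<le> ((e/2) * norm y)^2 + ((e/2) * norm x)^2"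
      using bD[of y] bD'[of x] e by (intro add_mono power_mono) auto
    also have "\<dots> = (e/2)^2 * ((norm y)^2 + (norm x)^2)" by (simp only: power_mult_distrib distrib_left)
    also have "\<dots> = ((e/2) * norm z)^2" unfolding z power_mult_distrib norm_Pair_sq by (simp add: add.commute)
    finally have sq: "(norm ((S - block_op C Cadj) z))^2 \<le> ((e/2) * norm z)^2" .
    have "0 \<le> (e/2) * norm z" using e by simp
    with sq show ?thesis by (rule power2_le_imp_le)
  qed
  have "norm (S - block_op C Cadj) \<le> e/2" using bound e by (intro norm_blinfun_bound) auto
  then have dist: "dist S (block_op C Cadj) < e" using e by (simp add: dist_norm)
  have Sclin: "clinear (blinfun_apply S)"
    unfolding clinear_def
  proof (intro conjI allI)
    show "S (x + y) = S x + S y" for x y by (simp add: blinfun.add_right)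
    show "S (c *\<^sub>C z) = c *\<^sub>C S z" for c z
      by (cases z) (simp add: scaleC_prod_def Sapp Cs Ds proj_scaleC scaleC_add_right)
  qed
  define W where "W = (\<lambda>e. (e, 0::'b)) ` E \<union> (\<lambda>e. (0::'a, Cadj e)) ` E"
  have W: "finite W" using E(1) by (simp add: W_def)
  obtain E' where E': "finite E'" "orthonormal E'" "\<forall>w\<in>W. proj E' w = w"
    using gram_schmidt[OF W] by blast
  have Qfix: "cinner w (proj E' v) = cinner w v" if "w \<in> W" for w v
    using E'(3) that proj_selfadj[of E' w v] by simp
  define Gf where "Gf v = (proj E (C (snd v)), Cadj (proj E (fst v)))" for v :: "'a \<times> 'b"
  have SG: "S v = v + Gf v" for v by (cases v) (simp add: Sapp Gf_def add.commute)
  have PC: "proj E (C (snd p)) = (\<Sum>e\<in>E. cinner (0, Cadj e) p *\<^sub>C e)" for p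
    by (simp add: proj_def cinner_0_Pair adj_flip[OF adj])
  have PF: "proj E (fst p) = (\<Sum>e\<in>E. cinner (e, 0) p *\<^sub>C e)" for p
    by (simp add: proj_def cinner_Pair_0)
  have G1: "Gf (proj E' v) = Gf v" for v
  proof -
    have "proj E (C (snd (proj E' v))) = proj E (C (snd v))"
      unfolding PC by (intro sum.cong refl) (simp add: Qfix W_def)
    moreover have "proj E (fst (proj E' v)) = proj E (fst v)"
      unfolding PF by (intro sum.cong refl) (simp add: Qfix W_def)
    ultimately show ?thesis by (simp add: Gf_def)
  qed
  have G2: "proj E' (Gf v) = Gf v" for v
  proof -
    define a where "a e = cinner e (C (snd v))" for e
    define b where "b e = cinner e (fst v)" for e
    have "Gf v = (\<Sum>e\<in>E. a e *\<^sub>C e, \<Sum>e\<in>E. b e *\<^sub>C Cadj e)"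
      by (simp add: Gf_def proj_def a_def b_def clinear_sum[OF Dclin])
    also have "\<dots> = (\<Sum>e\<in>E. a e *\<^sub>C (e, 0) + b e *\<^sub>C (0, Cadj e))"
      by (simp add: prod_eq_iff fst_sum snd_sum scaleC_prod_def)
    finally have gv: "Gf v = (\<Sum>e\<in>E. a e *\<^sub>C (e, 0) + b e *\<^sub>C (0, Cadj e))" .
    have "proj E' (Gf v) = (\<Sum>e\<in>E. a e *\<^sub>C proj E' (e, 0) + b e *\<^sub>C proj E' (0, Cadj e))"
      unfolding gv by (simp add: proj_sum proj_add proj_scaleC)
    also have "\<dots> = (\<Sum>e\<in>E. a e *\<^sub>C (e, 0) + b e *\<^sub>C (0, Cadj e))"
      using E'(3) by (intro sum.cong refl) (simp add: W_def)
    finally show ?thesis using gv by simp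
  qed
  have ident: "(norm (S v))^2 - (norm v)^2 = (norm (S (proj E' v)))^2 - (norm (proj E' v))^2" for v
  proof -
    have "cinner v (Gf v) = cinner (proj E' v) (Gf (proj E' v))"
      by (metis G1 G2 proj_selfadj)
    then show ?thesis by (simp add: SG norm_add_sq G1)
  qed
  have "S \<in> AN"
    unfolding AN_def BOps_def
    using Sclin attain_fr[OF E'(1,2) ident] by auto
  then show "\<exists>S\<in>AN. dist S (block_op C Cadj) < e" using dist by blast
qed

theorem corollary5p4:
  fixes C :: "'b::chilbert_space \<Rightarrow>\<^sub>L 'a::chilbert_space"
    and Cadj :: "'a \<Rightarrow>\<^sub>L 'b"
  assumes "separable_infdim TYPE('a)" and "separable_infdim TYPE('b)"
    and "C \<in> BOps"
    and "norm C \<le> 1"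
    and "\<forall>x y. cinner (C x) y = cinner x (Cadj y)"
  shows "block_op C Cadj \<in> closure (AN :: (('a \<times> 'b) \<Rightarrow>\<^sub>L ('a \<times> 'b)) set) \<longleftrightarrow> compact_op C"
proof
  assume "block_op C Cadj \<in> closure (AN :: (('a \<times> 'b) \<Rightarrow>\<^sub>L ('a \<times> 'b)) set)"
  then show "compact_op C" using closure_imp_compact[OF assms(4,5)] by blast
next
  assume "compact_op C"
  moreover have "clinear (blinfun_apply C)" using assms(3) by (simp add: BOps_def)
  ultimately show "block_op C Cadj \<in> closure (AN :: (('a \<times> 'b) \<Rightarrow>\<^sub>L ('a \<times> 'b)) set)"
    using compact_imp_closure assms(5) by blast
qed

end
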